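(* Consider the linear model $y_t = X_t'\beta + e_t$, $t=1,2,\ldots$, where $X_t$ is a $K\times 1$ vector of observed predictors and $\beta\in\mathbb{R}^K$ is a time-invariant parameter. Suppose the error process $\{e_t\}$ satisfies: (a) $E|e_t|^r<\infty$ for some $r>2$, for all $t$; (b) $\{e_t\}$ is a zero-mean strictly stationary strong mixing process with mixing coefficients $\alpha(k)=O\big(k^{-\frac{r}{r-2}-\delta}\big)$ for some $\delta>0$. Suppose further that for $j=0,1$ the moments $E(X_te_{t-j})$, $E(X_{t-j}e_t)$ and $E(X_tX_{t-j}')$ exist and are such that $\hat\beta\to_p\beta$, where $\hat\beta$ is the least squares estimator of $\beta$ computed from $t=1,\ldots,T_0$. Let $\hat e_t=y_t-X_t'\hat\beta$ ($t\le T_0$) be the OLS residuals, let $$\hat\rho_1=\frac{\sum_{t=1}^{T_0}\hat e_{t-1}\hat e_t}{\sum_{t=1}^{T_0}\hat e_{t-1}^2},$$ let $\hat y_{T_0+1|T_0}=X_{T_0+1}'\hat\beta$ be the standard prediction with error $\hat e_{T_0+1|T_0}=y_{T_0+1}-\hat y_{T_0+1|T_0}$, and let $\hat y^+_{T_0+1|T_0}=\hat y_{T_0+1|T_0}+\hat\rho_1\hat e_{T_0}$ be the corrected prediction with error $\hat e^+_{T_0+1|T_0}=y_{T_0+1}-\hat y^+_{T_0+1|T_0}$. Write $\gamma_k=E(e_te_{t-k})$. Then, as $T_0\to\infty$: (i) $\hat\rho_1\to_p\rho_1\equiv\gamma_1/\gamma_0$; (ii) $\hat e_{T_0+1|T_0}=e_{T_0+1}+o_p(1)$,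 where $e_{T_0+1}$ has mean $0$ and variance $\gamma_0$; (iii) $\hat e^+_{T_0+1|T_0}=e_{T_0+1}-\rho_1e_{T_0}+o_p(1)$, where $e_{T_0+1}-\rho_1e_{T_0}$ has mean $0$ and variance $\gamma_0(1-\rho_1^2)$.
   Context: The strong mixing coefficients are $\alpha(k)=\sup_{A,B}|P(A\cap B)-P(A)P(B)|$, where $A$ and $B$ range over events in the sigma fields generated by $\{e_s:s\le 0\}$ and $\{e_s:s\ge k\}$ respectively. *)

theory Defs
  imports "HOL-Probability.Probability" "HOL-Library.Landau_Symbols"
begin

definition conv_prob :: "'a measure \<Rightarrow> (nat \<Rightarrow> 'a \<Rightarrow> 'b::{metric_space,second_countable_topology}) \<Rightarrow> 'b \<Rightarrow> bool" where
  "conv_prob M Z c \<longleftrightarrow> (\<forall>T. Z T \<in> borel_measurable M) \<and>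
     (\<forall>\<epsilon>>0. (\<lambda>T. measure M {\<omega> \<in> space M. dist (Z T \<omega>) c > \<epsilon>}) \<longlonglongrightarrow> 0)"

definition gen_sigma :: "'a measure \<Rightarrow> (int \<Rightarrow> 'a \<Rightarrow> real) \<Rightarrow> int set \<Rightarrow> 'a set set" where
  "gen_sigma M e S = sigma_sets (space M) (\<Union>s\<in>S. {e s -` B \<inter> space M | B. B \<in> sets borel})"

definition mixing_coeff :: "'a measure \<Rightarrow> (int \<Rightarrow> 'a \<Rightarrow> real) \<Rightarrow> int \<Rightarrow> real" where
  "mixing_coeff M e k = (SUP AB \<in> gen_sigma M e {..0} \<times> gen_sigma M e {k..}.
       \<bar>measure M (fst AB \<inter> snd AB) - measure M (fst AB) * measure M (snd AB)\<bar>)"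

definition strictly_stationary :: "'a measure \<Rightarrow> (int \<Rightarrow> 'a \<Rightarrow> real) \<Rightarrow> bool" where
  "strictly_stationary M e \<longleftrightarrow> (\<forall>h::int.
     distr M (Pi\<^sub>M UNIV (\<lambda>_. borel)) (\<lambda>\<omega> t. e (t + h) \<omega>)
   = distr M (Pi\<^sub>M UNIV (\<lambda>_. borel)) (\<lambda>\<omega> t. e t \<omega>))"

text \<open>Autocovariance gamma_k = E(e_t e_{t-k}) (taken at t = 0; time-invariant under stationarity).\<close>
definition acov :: "'a measure \<Rightarrow> (int \<Rightarrow> 'a \<Rightarrow> real) \<Rightarrow> int \<Rightarrow> real" where
  "acov M e k = integral\<^sup>L M (\<lambda>\<omega>. e 0 \<omega> * e (- k) \<omega>)"

definition ols :: "(int \<Rightarrow> 'a \<Rightarrow> real^'k) \<Rightarrow> (int \<Rightarrow> 'a \<Rightarrow> real) \<Rightarrow> nat \<Rightarrow> 'a \<Rightarrow> real^'k" where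
  "ols X y T \<omega> = matrix_inv (\<Sum>t\<in>{1..int T}. (\<chi> i j. X t \<omega> $ i * X t \<omega> $ j))
                  *v (\<Sum>t\<in>{1..int T}. y t \<omega> *\<^sub>R X t \<omega>)"

definition resid :: "(int \<Rightarrow> 'a \<Rightarrow> real^'k) \<Rightarrow> (int \<Rightarrow> 'a \<Rightarrow> real) \<Rightarrow> nat \<Rightarrow> int \<Rightarrow> 'a \<Rightarrow> real" where
  "resid X y T t \<omega> = y t \<omega> - X t \<omega> \<bullet> ols X y T \<omega>"

definition rho_hat :: "(int \<Rightarrow> 'a \<Rightarrow> real^'k) \<Rightarrow> (int \<Rightarrow> 'a \<Rightarrow> real) \<Rightarrow> nat \<Rightarrow> 'a \<Rightarrow> real" where
  "rho_hat X y T \<omega> = (\<Sum>t\<in>{1..int T}. resid X y T (t - 1) \<omega> * resid X y T t \<omega>)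
                     / (\<Sum>t\<in>{1..int T}. (resid X y T (t - 1) \<omega>)^2)"

definition pred :: "(int \<Rightarrow> 'a \<Rightarrow> real^'k) \<Rightarrow> (int \<Rightarrow> 'a \<Rightarrow> real) \<Rightarrow> nat \<Rightarrow> 'a \<Rightarrow> real" where
  "pred X y T \<omega> = X (int T + 1) \<omega> \<bullet> ols X y T \<omega>"

definition pred_plus :: "(int \<Rightarrow> 'a \<Rightarrow> real^'k) \<Rightarrow> (int \<Rightarrow> 'a \<Rightarrow> real) \<Rightarrow> nat \<Rightarrow> 'a \<Rightarrow> real" where
  "pred_plus X y T \<omega> = pred X y T \<omega> + rho_hat X y T \<omega> * resid X y T (int T) \<omega>"

end

theory Submission
  imports Defs
begin


lemma proc_meas:
  assumes "\<forall>t. e t \<in> borel_measurable M"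
  shows "(\<lambda>\<omega> t. e (t + h) \<omega>) \<in> measurable M (Pi\<^sub>M UNIV (\<lambda>_. borel))"
  using assms by (intro measurable_PiM_single') auto

lemma stat_integral:
  fixes G :: "(int \<Rightarrow> real) \<Rightarrow> real"
  assumes st: "strictly_stationary M e" and em: "\<forall>t. e t \<in> borel_measurable M"
    and G: "G \<in> borel_measurable (Pi\<^sub>M UNIV (\<lambda>_. borel))"
  shows "(\<integral>\<omega>. G (\<lambda>t. e (t + h) \<omega>) \<partial>M) = (\<integral>\<omega>. G (\<lambda>t. e t \<omega>) \<partial>M)"
proof -
  have m1: "(\<lambda>\<omega> t. e (t + h) \<omega>) \<in> measurable M (Pi\<^sub>M UNIV (\<lambda>_. borel))"
    using proc_meas[OF em] .
  have m0: "(\<lambda>\<omega> t. e t \<omega>) \<in> measurable M (Pi\<^sub>M UNIV (\<lambda>_. borel))"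
    using proc_meas[OF em, of 0] by simp
  have "(\<integral>\<omega>. G (\<lambda>t. e (t + h) \<omega>) \<partial>M) = integral\<^sup>L (distr M (Pi\<^sub>M UNIV (\<lambda>_. borel)) (\<lambda>\<omega> t. e (t + h) \<omega>)) G"
    by (rule integral_distr[OF m1 G, symmetric])
  also have "\<dots> = integral\<^sup>L (distr M (Pi\<^sub>M UNIV (\<lambda>_. borel)) (\<lambda>\<omega> t. e t \<omega>)) G"
    using st unfolding strictly_stationary_def by metis
  also have "\<dots> = (\<integral>\<omega>. G (\<lambda>t. e t \<omega>) \<partial>M)"
    by (rule integral_distr[OF m0 G])
  finally show ?thesis .
qed

lemma stat_integrable:
  fixes G :: "(int \<Rightarrow> real) \<Rightarrow> real"
  assumes st: "strictly_stationary M e" and em: "\<forall>t. e t \<in> borel_measurable M"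
    and G: "G \<in> borel_measurable (Pi\<^sub>M UNIV (\<lambda>_. borel))"
  shows "integrable M (\<lambda>\<omega>. G (\<lambda>t. e (t + h) \<omega>)) \<longleftrightarrow> integrable M (\<lambda>\<omega>. G (\<lambda>t. e t \<omega>))"
proof -
  have m1: "(\<lambda>\<omega> t. e (t + h) \<omega>) \<in> measurable M (Pi\<^sub>M UNIV (\<lambda>_. borel))"
    using proc_meas[OF em] .
  have m0: "(\<lambda>\<omega> t. e t \<omega>) \<in> measurable M (Pi\<^sub>M UNIV (\<lambda>_. borel))"
    using proc_meas[OF em, of 0] by simp
  have "integrable M (\<lambda>\<omega>. G (\<lambda>t. e (t + h) \<omega>)) \<longleftrightarrow> integrable (distr M (Pi\<^sub>M UNIV (\<lambda>_. borel)) (\<lambda>\<omega> t. e (t + h) \<omega>)) G"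
    by (rule integrable_distr_eq[OF m1 G, symmetric])
  also have "\<dots> \<longleftrightarrow> integrable (distr M (Pi\<^sub>M UNIV (\<lambda>_. borel)) (\<lambda>\<omega> t. e t \<omega>)) G"
    using st unfolding strictly_stationary_def by metis
  also have "\<dots> \<longleftrightarrow> integrable M (\<lambda>\<omega>. G (\<lambda>t. e t \<omega>))"
    by (rule integrable_distr_eq[OF m0 G])
  finally show ?thesis .
qed

lemma pairG_meas:
  fixes f :: "real \<times> real \<Rightarrow> real"
  assumes [measurable]: "f \<in> borel_measurable borel"
  shows "(\<lambda>x::int\<Rightarrow>real. f (x a, x b)) \<in> borel_measurable (Pi\<^sub>M UNIV (\<lambda>_. borel))"
  by measurable


lemma (in prob_space) union_le:
  assumes "A \<in> events" "B \<in> events"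
  shows "measure M (A \<union> B) \<le> measure M A + measure M B"
  using assms by (intro measure_subadditive) auto

lemma conv_probD:
  assumes "conv_prob M Z c" "\<epsilon> > 0"
  shows "(\<lambda>T. measure M {\<omega> \<in> space M. dist (Z T \<omega>) c > \<epsilon>}) \<longlonglongrightarrow> 0"
  using assms unfolding conv_prob_def by auto

lemma conv_prob_cont2:
  fixes Z :: "nat \<Rightarrow> 'a \<Rightarrow> 'b::{metric_space,second_countable_topology}"
    and W :: "nat \<Rightarrow> 'a \<Rightarrow> 'c::{metric_space,second_countable_topology}"
    and g :: "'b \<Rightarrow> 'c \<Rightarrow> 'd::{metric_space,second_countable_topology}"
  assumes P: "prob_space M" and Z: "conv_prob M Z a" and W: "conv_prob M W b"
    and cont: "isCont (\<lambda>p. g (fst p) (snd p)) (a, b)"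
    and meas: "\<forall>T. (\<lambda>\<omega>. g (Z T \<omega>) (W T \<omega>)) \<in> borel_measurable M"
  shows "conv_prob M (\<lambda>T \<omega>. g (Z T \<omega>) (W T \<omega>)) (g a b)"
  unfolding conv_prob_def
proof (intro conjI allI impI meas[rule_format])
  interpret prob_space M by (rule P)
  fix \<epsilon> :: real assume "\<epsilon> > 0"
  then obtain \<delta> where d: "\<delta> > 0" and dg0: "\<And>p. p \<noteq> (a,b) \<Longrightarrow> dist p (a,b) < \<delta> \<Longrightarrow> dist (g (fst p) (snd p)) (g a b) < \<epsilon>"
    using cont unfolding isCont_def tendsto_iff eventually_at by fastforce
  have dg: "\<And>p. dist p (a,b) < \<delta> \<Longrightarrow> dist (g (fst p) (snd p)) (g a b) < \<epsilon>"
    subgoal for p using dg0[of p] \<open>\<epsilon> > 0\<close> by (cases "p = (a,b)") auto done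
  have Zm[measurable]: "\<And>T. Z T \<in> borel_measurable M" and Wm[measurable]: "\<And>T. W T \<in> borel_measurable M"
    using Z W unfolding conv_prob_def by auto
  have gm[measurable]: "\<And>T. (\<lambda>\<omega>. g (Z T \<omega>) (W T \<omega>)) \<in> borel_measurable M" by (rule meas[rule_format])
  have sub: "{\<omega> \<in> space M. dist (g (Z T \<omega>) (W T \<omega>)) (g a b) > \<epsilon>} \<subseteq>
      {\<omega> \<in> space M. dist (Z T \<omega>) a > \<delta>/3} \<union> {\<omega> \<in> space M. dist (W T \<omega>) b > \<delta>/3}" for T
  proof
    fix \<omega> assume \<omega>: "\<omega> \<in> {\<omega> \<in> space M. dist (g (Z T \<omega>) (W T \<omega>)) (g a b) > \<epsilon>}"
    show "\<omega> \<in> {\<omega> \<in> space M. dist (Z T \<omega>) a > \<delta>/3} \<union> {\<omega> \<in> space M. dist (W T \<omega>) b > \<delta>/3}"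
    proof (rule ccontr)
      assume "\<not> ?thesis"
      with \<omega> have h1: "dist (Z T \<omega>) a \<le> \<delta>/3" "dist (W T \<omega>) b \<le> \<delta>/3" by auto
      have "dist (Z T \<omega>, W T \<omega>) (a, b) \<le> dist (Z T \<omega>) a + dist (W T \<omega>) b"
        unfolding dist_Pair_Pair by (rule sqrt_sum_squares_le_sum_abs[THEN order_trans]) simp
      also have "\<dots> < \<delta>" using h1 d by simp
      finally have "dist (g (Z T \<omega>) (W T \<omega>)) (g a b) < \<epsilon>" using dg[of "(Z T \<omega>, W T \<omega>)"] by simp
      with \<omega> show False by simp
    qed
  qed
  have le: "measure M {\<omega> \<in> space M. dist (g (Z T \<omega>) (W T \<omega>)) (g a b) > \<epsilon>} \<le>
      measure M {\<omega> \<in> space M. dist (Z T \<omega>) a > \<delta>/3} + measure M {\<omega> \<in> space M. dist (W T \<omega>) b > \<delta>/3}" for T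
  proof -
    have "measure M {\<omega> \<in> space M. dist (g (Z T \<omega>) (W T \<omega>)) (g a b) > \<epsilon>} \<le>
      measure M ({\<omega> \<in> space M. dist (Z T \<omega>) a > \<delta>/3} \<union> {\<omega> \<in> space M. dist (W T \<omega>) b > \<delta>/3})"
      by (intro finite_measure_mono[OF sub[of T]]) measurable
    also have "\<dots> \<le> measure M {\<omega> \<in> space M. dist (Z T \<omega>) a > \<delta>/3} + measure M {\<omega> \<in> space M. dist (W T \<omega>) b > \<delta>/3}"
      by (intro union_le) measurable
    finally show ?thesis .
  qed
  have "(\<lambda>T. measure M {\<omega> \<in> space M. dist (Z T \<omega>) a > \<delta>/3} + measure M {\<omega> \<in> space M. dist (W T \<omega>) b > \<delta>/3}) \<longlonglongrightarrow> 0 + 0"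
    using d by (intro tendsto_add conv_probD[OF Z] conv_probD[OF W]) auto
  then have lim: "(\<lambda>T. measure M {\<omega> \<in> space M. dist (Z T \<omega>) a > \<delta>/3} + measure M {\<omega> \<in> space M. dist (W T \<omega>) b > \<delta>/3}) \<longlonglongrightarrow> 0" by simp
  show "(\<lambda>T. measure M {\<omega> \<in> space M. dist (g (Z T \<omega>) (W T \<omega>)) (g a b) > \<epsilon>}) \<longlonglongrightarrow> 0"
    apply (rule tendsto_sandwich[where f="\<lambda>_. 0", OF _ _ tendsto_const lim])
     apply simp
    apply (rule always_eventually, rule allI, rule le)
    done
qed

lemma conv_prob_const:
  assumes "prob_space M"
  shows "conv_prob M (\<lambda>T \<omega>. c) c"
  unfolding conv_prob_def by auto

lemma conv_prob_cont1:
  fixes Z :: "nat \<Rightarrow> 'a \<Rightarrow> 'b::{metric_space,second_countable_topology}"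
    and g :: "'b \<Rightarrow> 'd::{metric_space,second_countable_topology}"
  assumes P: "prob_space M" and Z: "conv_prob M Z a"
    and cont: "isCont g a"
    and meas: "\<forall>T. (\<lambda>\<omega>. g (Z T \<omega>)) \<in> borel_measurable M"
  shows "conv_prob M (\<lambda>T \<omega>. g (Z T \<omega>)) (g a)"
proof -
  have c2: "isCont (\<lambda>p. g (fst p)) (a, 0::real)"
  proof -
    have "isCont (\<lambda>p. fst p) (a, 0::real)" using isCont_fst[OF continuous_ident] by simp
    then show ?thesis using isCont_o2[where f=fst and g=g and a="(a,0::real)"] cont by simp
  qed
  have "conv_prob M (\<lambda>T \<omega>. (\<lambda>x y. g x) (Z T \<omega>) ((\<lambda>T \<omega>. (0::real)) T \<omega>)) ((\<lambda>x y. g x) a 0)"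
    by (rule conv_prob_cont2[OF P Z conv_prob_const[OF P]]) (use c2 meas in auto)
  then show ?thesis by simp
qed

lemma conv_prob_dominated:
  fixes R V :: "nat \<Rightarrow> 'a \<Rightarrow> real"
  assumes P: "prob_space M" and V: "conv_prob M V 0"
    and Rm: "\<forall>T. R T \<in> borel_measurable M"
    and dom: "\<And>T \<omega>. \<omega> \<in> space M \<Longrightarrow> \<bar>R T \<omega>\<bar> \<le> V T \<omega>"
  shows "conv_prob M R 0"
  unfolding conv_prob_def
proof (intro conjI allI impI Rm[rule_format])
  interpret prob_space M by (rule P)
  fix \<epsilon> :: real assume e: "\<epsilon> > 0"
  have Vm[measurable]: "\<And>T. V T \<in> borel_measurable M" using V unfolding conv_prob_def by auto
  have Rm'[measurable]: "\<And>T. R T \<in> borel_measurable M" using Rm by auto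
  have le: "measure M {\<omega> \<in> space M. dist (R T \<omega>) 0 > \<epsilon>} \<le> measure M {\<omega> \<in> space M. dist (V T \<omega>) 0 > \<epsilon>}" for T
    apply (intro finite_measure_mono)
    subgoal proof
      fix \<omega> assume "\<omega> \<in> {\<omega> \<in> space M. dist (R T \<omega>) 0 > \<epsilon>}"
      then have "\<omega> \<in> space M" "dist (R T \<omega>) 0 > \<epsilon>" by auto
      with dom[of \<omega> T] show "\<omega> \<in> {\<omega> \<in> space M. dist (V T \<omega>) 0 > \<epsilon>}" by (simp add: dist_real_def)
    qed
    subgoal by measurable
    done
  show "(\<lambda>T. measure M {\<omega> \<in> space M. dist (R T \<omega>) 0 > \<epsilon>}) \<longlonglongrightarrow> 0"
    apply (rule tendsto_sandwich[where f="\<lambda>_. 0", OF _ _ tendsto_const conv_probD[OF V e]])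
     apply simp
    apply (rule always_eventually, rule allI, rule le)
    done
qed

lemma conv_prob_cong:
  fixes Z W :: "nat \<Rightarrow> 'a \<Rightarrow> 'b::{metric_space,second_countable_topology}"
  assumes W: "conv_prob M W c" and Zm: "\<And>T. Z T \<in> borel_measurable M"
    and eq: "\<And>T \<omega>. \<omega> \<in> space M \<Longrightarrow> Z T \<omega> = W T \<omega>"
  shows "conv_prob M Z c"
proof -
  have "{\<omega> \<in> space M. dist (Z T \<omega>) c > \<epsilon>} = {\<omega> \<in> space M. dist (W T \<omega>) c > \<epsilon>}" for T \<epsilon>
    using eq by auto
  then show ?thesis using W Zm unfolding conv_prob_def by simp
qed

definition bip :: "'a measure \<Rightarrow> (nat \<Rightarrow> 'a \<Rightarrow> real) \<Rightarrow> bool" where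
  "bip M Z \<longleftrightarrow> (\<forall>\<epsilon>>0. \<exists>C>0. \<forall>T. measure M {\<omega> \<in> space M. \<bar>Z T \<omega>\<bar> > C} \<le> \<epsilon>)"

lemma bip_mult_conv0:
  fixes Z W :: "nat \<Rightarrow> 'a \<Rightarrow> real"
  assumes P: "prob_space M" and Z: "bip M Z" and Zm: "\<forall>T. Z T \<in> borel_measurable M"
    and W: "conv_prob M W 0"
  shows "conv_prob M (\<lambda>T \<omega>. Z T \<omega> * W T \<omega>) 0"
  unfolding conv_prob_def
proof (intro conjI allI impI)
  interpret prob_space M by (rule P)
  have Wm[measurable]: "\<And>T. W T \<in> borel_measurable M" using W unfolding conv_prob_def by auto
  have Zm'[measurable]: "\<And>T. Z T \<in> borel_measurable M" using Zm by auto
  show "(\<lambda>\<omega>. Z T \<omega> * W T \<omega>) \<in> borel_measurable M" for T by measurable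
  fix \<epsilon> :: real assume e: "\<epsilon> > 0"
  show "(\<lambda>T. measure M {\<omega> \<in> space M. dist (Z T \<omega> * W T \<omega>) 0 > \<epsilon>}) \<longlonglongrightarrow> 0"
  proof (rule LIMSEQ_I)
    fix r :: real assume r: "r > 0"
    have r2: "r/2 > 0" using r by simp
    obtain C where C: "C > 0" "\<And>T. measure M {\<omega> \<in> space M. \<bar>Z T \<omega>\<bar> > C} \<le> r/2"
      using Z[unfolded bip_def, rule_format, OF r2] by auto
    have "(\<lambda>T. measure M {\<omega> \<in> space M. dist (W T \<omega>) 0 > \<epsilon>/C}) \<longlonglongrightarrow> 0"
      using C e by (intro conv_probD[OF W]) auto
    from LIMSEQ_D[OF this r2] obtain N where N: "\<And>T. T \<ge> N \<Longrightarrow> norm (measure M {\<omega> \<in> space M. dist (W T \<omega>) 0 > \<epsilon>/C} - 0) < r/2"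
      by blast
    show "\<exists>N. \<forall>T\<ge>N. norm (measure M {\<omega> \<in> space M. dist (Z T \<omega> * W T \<omega>) 0 > \<epsilon>} - 0) < r"
    proof (intro exI allI impI)
      fix T assume T: "T \<ge> N"
      have sub: "{\<omega> \<in> space M. dist (Z T \<omega> * W T \<omega>) 0 > \<epsilon>} \<subseteq>
          {\<omega> \<in> space M. \<bar>Z T \<omega>\<bar> > C} \<union> {\<omega> \<in> space M. dist (W T \<omega>) 0 > \<epsilon>/C}"
      proof -
        have "\<epsilon> / C < \<bar>W T \<omega>\<bar>" if "\<epsilon> < \<bar>Z T \<omega> * W T \<omega>\<bar>" "\<not> C < \<bar>Z T \<omega>\<bar>" for \<omega>
        proof -
        note that
        moreover have "\<bar>Z T \<omega> * W T \<omega>\<bar> \<le> C * \<bar>W T \<omega>\<bar>"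
          using \<open>\<not> C < \<bar>Z T \<omega>\<bar>\<close> by (simp add: abs_mult mult_right_mono)
        ultimately have "\<epsilon> < C * \<bar>W T \<omega>\<bar>" by linarith
        then show "\<epsilon> / C < \<bar>W T \<omega>\<bar>" using C by (simp add: divide_less_eq mult.commute)
        qed
        then show ?thesis by (auto simp: dist_real_def)
      qed
      have "measure M {\<omega> \<in> space M. dist (Z T \<omega> * W T \<omega>) 0 > \<epsilon>} \<le>
          measure M ({\<omega> \<in> space M. \<bar>Z T \<omega>\<bar> > C} \<union> {\<omega> \<in> space M. dist (W T \<omega>) 0 > \<epsilon>/C})"
        by (intro finite_measure_mono[OF sub]) measurable
      also have "\<dots> \<le> measure M {\<omega> \<in> space M. \<bar>Z T \<omega>\<bar> > C} + measure M {\<omega> \<in> space M. dist (W T \<omega>) 0 > \<epsilon>/C}"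
        by (intro union_le) measurable
      also have "\<dots> < r/2 + r/2" using C(2)[of T] N[OF T] by simp
      finally show "norm (measure M {\<omega> \<in> space M. dist (Z T \<omega> * W T \<omega>) 0 > \<epsilon>} - 0) < r" by simp
    qed
  qed
qed

lemma bip_moment:
  fixes Z :: "nat \<Rightarrow> 'a \<Rightarrow> real"
  assumes P: "prob_space M" and Zi: "\<forall>T. integrable M (\<lambda>\<omega>. \<bar>Z T \<omega>\<bar>)"
    and Zm: "\<forall>T. Z T \<in> borel_measurable M"
    and B: "\<forall>T. (\<integral>\<omega>. \<bar>Z T \<omega>\<bar> \<partial>M) \<le> B"
  shows "bip M Z"
  unfolding bip_def
proof (intro allI impI)
  interpret prob_space M by (rule P)
  fix \<epsilon> :: real assume e: "\<epsilon> > 0"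
  have Zm'[measurable]: "\<And>T. Z T \<in> borel_measurable M" using Zm by auto
  define C where "C = \<bar>B\<bar> / \<epsilon> + 1"
  have "\<bar>B\<bar> / \<epsilon> \<ge> 0" using e by simp
  then have Cpos: "C > 0" unfolding C_def by linarith
  show "\<exists>C>0. \<forall>T. measure M {\<omega> \<in> space M. \<bar>Z T \<omega>\<bar> > C} \<le> \<epsilon>"
  proof (intro exI[of _ C] conjI allI Cpos)
    fix T
    have "measure M {\<omega> \<in> space M. \<bar>Z T \<omega>\<bar> > C} \<le> measure M {\<omega> \<in> space M. \<bar>Z T \<omega>\<bar> \<ge> C}"
      apply (intro finite_measure_mono) apply force by measurable
    also have "\<dots> \<le> (\<integral>\<omega>. \<bar>Z T \<omega>\<bar> \<partial>M) / C"
      using Zi Cpos by (intro integral_Markov_inequality_measure) auto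
    also have "\<dots> \<le> \<bar>B\<bar> / C" using B Cpos by (intro divide_right_mono) (auto intro: order_trans)
    also have "\<dots> \<le> \<epsilon>"
      using Cpos e unfolding C_def by (simp add: divide_le_eq field_simps)
    finally show "measure M {\<omega> \<in> space M. \<bar>Z T \<omega>\<bar> > C} \<le> \<epsilon>" .
  qed
qed


definition qz :: "nat \<Rightarrow> real \<Rightarrow> real" where
  "qz n x = of_int \<lfloor>real n * max (- real n) (min (real n) x)\<rfloor> / real n"

definition QV :: "nat \<Rightarrow> real set" where
  "QV n = (\<lambda>j. of_int j / real n) ` {- int (n*n) .. int (n*n)}"

lemma qz_meas[measurable]: "qz n \<in> borel_measurable borel"
  unfolding qz_def by measurable

lemma QV_finite: "finite (QV n)"
  unfolding QV_def by simp

lemma QV_card: "card (QV n) \<le> 2 * n^2 + 1"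
proof -
  have "card (QV n) \<le> card {- int (n*n) .. int (n*n)}" unfolding QV_def by (rule card_image_le) simp
  also have "\<dots> = nat (2 * int (n*n) + 1)" by simp
  also have "2 * int (n*n) + 1 = int (2 * n^2 + 1)" by (simp add: power2_eq_square)
  also have "nat (int (2 * n^2 + 1)) = 2 * n^2 + 1" by (rule nat_int)
  finally show ?thesis .
qed

lemma QV_bound: assumes "n \<ge> 1" "v \<in> QV n" shows "\<bar>v\<bar> \<le> real n"
proof -
  from assms(2) obtain j where j0: "v = of_int j / real n" "j \<in> {- int (n*n) .. int (n*n)}"
    unfolding QV_def by (rule imageE)
  then have j: "v = of_int j / real n" "- int (n*n) \<le> j" "j \<le> int (n*n)" by auto
  have j1: "real_of_int j \<le> real_of_int (int (n*n))" using j(3) by (simp only: of_int_le_iff)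
  have j2: "real_of_int (- int (n*n)) \<le> real_of_int j" using j(2) by (simp only: of_int_le_iff)
  have "\<bar>of_int j\<bar> \<le> real (n*n)" using j1 j2 by simp
  then have "\<bar>of_int j\<bar> \<le> (real n)^2" by (simp add: power2_eq_square)
  then have "\<bar>of_int j\<bar> / real n \<le> (real n)^2 / real n" using assms by (intro divide_right_mono) auto
  then show ?thesis using j assms by (simp add: power2_eq_square)
qed

lemma qz_range: assumes "n \<ge> 1" shows "qz n x \<in> QV n"
proof -
  define y where "y = max (- real n) (min (real n) x)"
  have y: "- real n \<le> y" "y \<le> real n" unfolding y_def using assms by auto
  have "real n * y \<le> real n * real n" using y by (intro mult_left_mono) auto
  then have u: "\<lfloor>real n * y\<rfloor> \<le> int (n*n)"
    by (simp add: floor_le_iff)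
  have "real n * (- real n) \<le> real n * y" using y by (intro mult_left_mono) auto
  then have "- (real n * real n) \<le> real n * y" by simp
  then have l: "- int (n*n) \<le> \<lfloor>real n * y\<rfloor>"
    by (simp add: le_floor_iff)
  show ?thesis unfolding qz_def QV_def y_def[symmetric] using u l by auto
qed

lemma qz_bound: assumes "n \<ge> 1" shows "\<bar>qz n x\<bar> \<le> real n"
  using QV_bound[OF assms qz_range[OF assms]] .

lemma qz_err: assumes "n \<ge> 1" shows "\<bar>x - qz n x\<bar> \<le> 1 / real n + (if \<bar>x\<bar> > real n then \<bar>x\<bar> else 0)"
proof (cases "\<bar>x\<bar> > real n")
  case True
  then have "x > real n \<or> x < - real n" by auto
  then show ?thesis
  proof
    assume x: "x > real n"
    then have "max (- real n) (min (real n) x) = real n" by auto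
    then have "qz n x = of_int \<lfloor>real n * real n\<rfloor> / real n" unfolding qz_def by simp
    also have "real n * real n = of_int (int (n*n))" by simp
    also have "of_int \<lfloor>(of_int (int (n*n)) :: real)\<rfloor> / real n = real n" using assms
      by (simp only: floor_of_int) simp
    finally have q1: "qz n x = real n" .
    have h0: "0 \<le> 1 / real n" "0 \<le> real n" by simp_all
    have a: "(if \<bar>x\<bar> > real n then \<bar>x\<bar> else 0) = \<bar>x\<bar>" using True by simp
    have b: "\<bar>x - qz n x\<bar> = x - real n" using x q1 by simp
    have c: "\<bar>x\<bar> = x" using x h0 by simp
    show ?thesis using a b c h0 by linarith
  next
    assume x: "x < - real n"
    then have "max (- real n) (min (real n) x) = - real n" by auto
    then have "qz n x = of_int \<lfloor>real n * - real n\<rfloor> / real n" unfolding qz_def by simp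
    also have "real n * - real n = of_int (- int (n*n))" by simp
    also have "of_int \<lfloor>(of_int (- int (n*n)) :: real)\<rfloor> / real n = - real n" using assms
      by (simp only: floor_of_int) simp
    finally have q1: "qz n x = - real n" .
    have h0: "0 \<le> 1 / real n" "0 \<le> real n" by simp_all
    have a: "(if \<bar>x\<bar> > real n then \<bar>x\<bar> else 0) = \<bar>x\<bar>" using True by simp
    have b: "\<bar>x - qz n x\<bar> = - x - real n" using x q1 by simp
    have c: "\<bar>x\<bar> = - x" using x h0 by simp
    show ?thesis using a b c h0 by linarith
  qed
next
  case False
  then have "max (- real n) (min (real n) x) = x" by auto
  then have q: "qz n x = of_int \<lfloor>real n * x\<rfloor> / real n" unfolding qz_def by simp
  have n0: "real n > 0" using assms by simp
  have "of_int \<lfloor>real n * x\<rfloor> \<le> real n * x" "real n * x < of_int \<lfloor>real n * x\<rfloor> + 1" by linarith+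
  then have "\<bar>real n * x - of_int \<lfloor>real n * x\<rfloor>\<bar> \<le> 1" by linarith
  then have "\<bar>real n * x - of_int \<lfloor>real n * x\<rfloor>\<bar> / real n \<le> 1 / real n" using n0
    by (intro divide_right_mono) auto
  moreover have "\<bar>real n * x - of_int \<lfloor>real n * x\<rfloor>\<bar> / real n = \<bar>x - of_int \<lfloor>real n * x\<rfloor> / real n\<bar>"
  proof -
    have e1: "(real n * x - of_int \<lfloor>real n * x\<rfloor>) / real n = x - of_int \<lfloor>real n * x\<rfloor> / real n"
      using n0 by (simp add: diff_divide_distrib)
    have e2: "\<bar>real n * x - of_int \<lfloor>real n * x\<rfloor>\<bar> / real n = \<bar>(real n * x - of_int \<lfloor>real n * x\<rfloor>) / real n\<bar>"
      using n0 by (simp add: abs_divide)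
    show ?thesis using e1 e2 by simp
  qed
  ultimately have "\<bar>x - of_int \<lfloor>real n * x\<rfloor> / real n\<bar> \<le> 1 / real n" by simp
  then show ?thesis using q False by simp
qed


lemma (in prob_space) integrable_c_ind:
  assumes "A \<in> events"
  shows "integrable M (\<lambda>\<omega>. c * indicator A \<omega> :: real)"
  using assms by (intro integrable_mult_right integrable_real_indicator) (auto simp: less_top[symmetric])

lemma (in prob_space) sum_ind_eq:
  fixes X :: "'a \<Rightarrow> real"
  assumes V: "finite V" and "\<omega> \<in> space M" and "X \<omega> \<in> V"
  shows "X \<omega> = (\<Sum>v\<in>V. v * indicator {x \<in> space M. X x = v} \<omega>)"
proof -
  have "(\<Sum>v\<in>V. v * indicator {x \<in> space M. X x = v} \<omega>) = (\<Sum>v\<in>V. if X \<omega> = v then v else 0)"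
    using assms(2) by (intro sum.cong) (auto simp: indicator_def)
  also have "\<dots> = X \<omega>" using V assms(3) by (simp add: sum.delta)
  finally show ?thesis by simp
qed

lemma (in prob_space) expectation_finite_vals:
  fixes X :: "'a \<Rightarrow> real"
  assumes Xm[measurable]: "X \<in> borel_measurable M" and V: "finite V" and XV: "\<And>\<omega>. \<omega> \<in> space M \<Longrightarrow> X \<omega> \<in> V"
  shows "expectation X = (\<Sum>v\<in>V. v * prob {x \<in> space M. X x = v})"
proof -
  have "expectation X = expectation (\<lambda>\<omega>. \<Sum>v\<in>V. v * indicator {x \<in> space M. X x = v} \<omega>)"
  proof (intro Bochner_Integration.integral_cong refl)
    fix \<omega> assume w: "\<omega> \<in> space M"
    show "X \<omega> = (\<Sum>v\<in>V. v * indicator {x \<in> space M. X x = v} \<omega>)" by (rule sum_ind_eq[where X=X, OF V w XV[OF w]])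
  qed
  also have "\<dots> = (\<Sum>v\<in>V. expectation (\<lambda>\<omega>. v * indicator {x \<in> space M. X x = v} \<omega>))"
    by (intro Bochner_Integration.integral_sum integrable_mult_right integrable_real_indicator) (auto simp: less_top[symmetric])
  also have "\<dots> = (\<Sum>v\<in>V. v * prob {x \<in> space M. X x = v})"
  proof (intro sum.cong refl)
    fix v assume "v \<in> V"
    have "{x \<in> space M. X x = v} \<in> events" by measurable
    then show "expectation (\<lambda>\<omega>. v * indicator {x \<in> space M. X x = v} \<omega>) = v * prob {x \<in> space M. X x = v}"
      by (simp add: Int_absorb2 sets.sets_into_space)
  qed
  finally show ?thesis .
qed

lemma (in prob_space) expectation_finite_vals2:
  fixes X Y :: "'a \<Rightarrow> real"
  assumes Xm[measurable]: "X \<in> borel_measurable M" and Ym[measurable]: "Y \<in> borel_measurable M"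
    and V: "finite V" and XV: "\<And>\<omega>. \<omega> \<in> space M \<Longrightarrow> X \<omega> \<in> V" and YV: "\<And>\<omega>. \<omega> \<in> space M \<Longrightarrow> Y \<omega> \<in> V"
  shows "expectation (\<lambda>\<omega>. X \<omega> * Y \<omega>) = (\<Sum>v\<in>V. \<Sum>w\<in>V. v * w * prob ({x \<in> space M. X x = v} \<inter> {x \<in> space M. Y x = w}))"
proof -
  have pt: "X \<omega> * Y \<omega> = (\<Sum>v\<in>V. \<Sum>w\<in>V. v * w * indicator ({x \<in> space M. X x = v} \<inter> {x \<in> space M. Y x = w}) \<omega>)"
    if \<omega>: "\<omega> \<in> space M" for \<omega>
  proof -
    have "X \<omega> * Y \<omega> = (\<Sum>v\<in>V. v * indicator {x \<in> space M. X x = v} \<omega>) * (\<Sum>w\<in>V. w * indicator {x \<in> space M. Y x = w} \<omega>)"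
      using sum_ind_eq[where X=X, OF V \<omega> XV[OF \<omega>]] sum_ind_eq[where X=Y, OF V \<omega> YV[OF \<omega>]] by (rule arg_cong2[where f="(*)"])
    also have "\<dots> = (\<Sum>v\<in>V. \<Sum>w\<in>V. (v * indicator {x \<in> space M. X x = v} \<omega>) * (w * indicator {x \<in> space M. Y x = w} \<omega>))"
      by (rule sum_product)
    also have "\<dots> = (\<Sum>v\<in>V. \<Sum>w\<in>V. v * w * indicator ({x \<in> space M. X x = v} \<inter> {x \<in> space M. Y x = w}) \<omega>)"
      by (intro sum.cong refl) (simp add: indicator_inter_arith)
    finally show ?thesis .
  qed
  have evA: "\<And>v w. {x \<in> space M. X x = v} \<inter> {x \<in> space M. Y x = w} \<in> events" by measurable
  have "expectation (\<lambda>\<omega>. X \<omega> * Y \<omega>) = expectation (\<lambda>\<omega>. \<Sum>v\<in>V. \<Sum>w\<in>V. v * w * indicator ({x \<in> space M. X x = v} \<inter> {x \<in> space M. Y x = w}) \<omega>)"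
    using pt by (intro Bochner_Integration.integral_cong) auto
  also have "\<dots> = (\<Sum>v\<in>V. \<Sum>w\<in>V. expectation (\<lambda>\<omega>. v * w * indicator ({x \<in> space M. X x = v} \<inter> {x \<in> space M. Y x = w}) \<omega>))"
    apply (subst Bochner_Integration.integral_sum)
     apply (intro Bochner_Integration.integrable_sum integrable_c_ind evA)
    apply (intro sum.cong refl)
    apply (subst Bochner_Integration.integral_sum)
     apply (intro integrable_c_ind evA)
    apply (rule refl)
    done
  also have "\<dots> = (\<Sum>v\<in>V. \<Sum>w\<in>V. v * w * prob ({x \<in> space M. X x = v} \<inter> {x \<in> space M. Y x = w}))"
  proof (intro sum.cong refl)
    fix v w
    have "{x \<in> space M. X x = v} \<inter> {x \<in> space M. Y x = w} \<in> events" by measurable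
    then show "expectation (\<lambda>\<omega>. v * w * indicator ({x \<in> space M. X x = v} \<inter> {x \<in> space M. Y x = w}) \<omega>) = v * w * prob ({x \<in> space M. X x = v} \<inter> {x \<in> space M. Y x = w})"
      by (simp add: Int_absorb2 sets.sets_into_space)
  qed
  finally show ?thesis .
qed

lemma (in prob_space) cov_finite:
  fixes X Y :: "'a \<Rightarrow> real"
  assumes Xm[measurable]: "X \<in> borel_measurable M" and Ym[measurable]: "Y \<in> borel_measurable M"
    and V: "finite V" and XV: "\<And>\<omega>. \<omega> \<in> space M \<Longrightarrow> X \<omega> \<in> V" and YV: "\<And>\<omega>. \<omega> \<in> space M \<Longrightarrow> Y \<omega> \<in> V"
    and c: "\<And>v. v \<in> V \<Longrightarrow> \<bar>v\<bar> \<le> c"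
    and a: "\<And>v w. v \<in> V \<Longrightarrow> w \<in> V \<Longrightarrow>
       \<bar>prob ({x \<in> space M. X x = v} \<inter> {x \<in> space M. Y x = w}) - prob {x \<in> space M. X x = v} * prob {x \<in> space M. Y x = w}\<bar> \<le> a"
  shows "\<bar>expectation (\<lambda>\<omega>. X \<omega> * Y \<omega>) - expectation X * expectation Y\<bar> \<le> real (card V) * real (card V) * (c * c * a)"
proof -
  let ?A = "\<lambda>v. {x \<in> space M. X x = v}" and ?B = "\<lambda>w. {x \<in> space M. Y x = w}"
  have "expectation X * expectation Y = (\<Sum>v\<in>V. v * prob (?A v)) * (\<Sum>w\<in>V. w * prob (?B w))"
    using expectation_finite_vals[OF Xm V XV] expectation_finite_vals[OF Ym V YV] by simp
  also have "\<dots> = (\<Sum>v\<in>V. \<Sum>w\<in>V. (v * prob (?A v)) * (w * prob (?B w)))" by (rule sum_product)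
  finally have e1: "expectation X * expectation Y = (\<Sum>v\<in>V. \<Sum>w\<in>V. v * w * (prob (?A v) * prob (?B w)))"
    by (simp add: algebra_simps)
  let ?t = "\<lambda>v w. v * w * (prob (?A v \<inter> ?B w) - prob (?A v) * prob (?B w))"
  have D: "expectation (\<lambda>\<omega>. X \<omega> * Y \<omega>) - expectation X * expectation Y = (\<Sum>v\<in>V. \<Sum>w\<in>V. ?t v w)"
    using expectation_finite_vals2[OF Xm Ym V XV YV] e1
    by (simp add: sum_subtractf right_diff_distrib)
  have "\<bar>\<Sum>v\<in>V. \<Sum>w\<in>V. ?t v w\<bar> \<le> (\<Sum>v\<in>V. \<bar>\<Sum>w\<in>V. ?t v w\<bar>)" by (rule sum_abs)
  also have "\<dots> \<le> (\<Sum>v\<in>V. \<Sum>w\<in>V. \<bar>?t v w\<bar>)" by (rule sum_mono) (rule sum_abs)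
  also have "\<dots> \<le> (\<Sum>v\<in>V. \<Sum>w\<in>V. c * c * a)"
  proof (intro sum_mono)
    fix v w assume vw: "v \<in> V" "w \<in> V"
    have "\<bar>v * w * (prob (?A v \<inter> ?B w) - prob (?A v) * prob (?B w))\<bar> = \<bar>v\<bar> * \<bar>w\<bar> * \<bar>prob (?A v \<inter> ?B w) - prob (?A v) * prob (?B w)\<bar>"
      by (simp add: abs_mult)
    also have "\<dots> \<le> c * c * a"
      using c[OF vw(1)] c[OF vw(2)] a[OF vw] by (intro mult_mono) auto
    finally show "\<bar>v * w * (prob (?A v \<inter> ?B w) - prob (?A v) * prob (?B w))\<bar> \<le> c * c * a" .
  qed
  also have "\<dots> = real (card V) * real (card V) * (c * c * a)" by simp
  finally show ?thesis unfolding D .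
qed


definition sig :: "'a measure \<Rightarrow> (int \<Rightarrow> 'a \<Rightarrow> real) \<Rightarrow> int set \<Rightarrow> 'a measure" where
  "sig M e S = sigma (space M) (\<Union>s\<in>S. {e s -` B \<inter> space M | B. B \<in> sets borel})"

lemma sig_gen_sub: "(\<Union>s\<in>S. {e s -` B \<inter> space M | B. B \<in> sets (borel :: real measure)}) \<subseteq> Pow (space M)"
  by auto

lemma sets_sig: "sets (sig M e S) = gen_sigma M e S"
  unfolding sig_def gen_sigma_def using sig_gen_sub by (rule sets_measure_of)

lemma space_sig: "space (sig M e S) = space M"
  unfolding sig_def using sig_gen_sub by (rule space_measure_of)

lemma e_sig_meas: assumes "s \<in> S" shows "e s \<in> borel_measurable (sig M e S)"
proof (rule measurableI)
  fix A :: "real set" assume A: "A \<in> sets borel"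
  have "e s -` A \<inter> space M \<in> (\<Union>s\<in>S. {e s -` B \<inter> space M | B. B \<in> sets borel})"
    using A assms by blast
  then have "e s -` A \<inter> space M \<in> gen_sigma M e S"
    unfolding gen_sigma_def by (rule sigma_sets.Basic)
  then show "e s -` A \<inter> space (sig M e S) \<in> sets (sig M e S)"
    by (simp add: sets_sig space_sig)
qed auto

lemma set_in_gen:
  fixes f :: "real \<times> real \<Rightarrow> real"
  assumes fm: "f \<in> borel_measurable borel" and s: "s1 \<in> S" "s2 \<in> S"
  shows "{\<omega> \<in> space M. f (e s1 \<omega>, e s2 \<omega>) = v} \<in> gen_sigma M e S"
proof -
  have m1[measurable]: "e s1 \<in> borel_measurable (sig M e S)" by (rule e_sig_meas[OF s(1)])
  have m2[measurable]: "e s2 \<in> borel_measurable (sig M e S)" by (rule e_sig_meas[OF s(2)])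
  have [measurable]: "f \<in> borel_measurable borel" by (rule fm)
  have "(\<lambda>\<omega>. f (e s1 \<omega>, e s2 \<omega>)) \<in> borel_measurable (sig M e S)" by measurable
  then have "(\<lambda>\<omega>. f (e s1 \<omega>, e s2 \<omega>)) -` {v} \<inter> space (sig M e S) \<in> sets (sig M e S)"
    by (rule measurable_sets) simp
  moreover have "(\<lambda>\<omega>. f (e s1 \<omega>, e s2 \<omega>)) -` {v} \<inter> space (sig M e S) = {\<omega> \<in> space M. f (e s1 \<omega>, e s2 \<omega>) = v}"
    by (auto simp: space_sig)
  ultimately show ?thesis by (simp add: sets_sig)
qed

lemma mixing_bound:
  assumes P: "prob_space M" and A: "A \<in> gen_sigma M e {..0}" and B: "B \<in> gen_sigma M e {k..}"
  shows "\<bar>measure M (A \<inter> B) - measure M A * measure M B\<bar> \<le> mixing_coeff M e k"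
proof -
  interpret prob_space M by (rule P)
  let ?f = "\<lambda>AB. \<bar>measure M (fst AB \<inter> snd AB) - measure M (fst AB) * measure M (snd AB)\<bar>"
  have b: "?f AB \<le> 1" for AB
  proof -
    have "0 \<le> prob (fst AB \<inter> snd AB)" "prob (fst AB \<inter> snd AB) \<le> 1"
      "0 \<le> prob (fst AB) * prob (snd AB)" "prob (fst AB) * prob (snd AB) \<le> 1"
      by (auto intro!: mult_le_one)
    then show ?thesis by linarith
  qed
  have "?f (A, B) \<le> (SUP AB \<in> gen_sigma M e {..0} \<times> gen_sigma M e {k..}. ?f AB)"
  proof (rule cSUP_upper)
    show "(A, B) \<in> gen_sigma M e {..0} \<times> gen_sigma M e {k..}" using A B by simp
    show "bdd_above (?f ` (gen_sigma M e {..0} \<times> gen_sigma M e {k..}))"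
      by (rule bdd_aboveI2[where M=1]) (rule b)
  qed
  then show ?thesis unfolding mixing_coeff_def by simp
qed

lemma alpha_to_0:
  assumes "(\<lambda>k::nat. mixing_coeff M e (int k)) \<in> O(\<lambda>k. real k powr (- (r / (r - 2)) - \<delta>))"
    and r: "r > 2" and d: "\<delta> > 0"
  shows "(\<lambda>k::nat. mixing_coeff M e (int k)) \<longlonglongrightarrow> 0"
proof -
  from assms(1) obtain c where c: "c > 0"
    "eventually (\<lambda>k. norm (mixing_coeff M e (int k)) \<le> c * norm (real k powr (- (r / (r - 2)) - \<delta>))) sequentially"
    by (elim landau_o.bigE)
  have "r / (r - 2) > 0" using r by simp
  then have neg: "- (r / (r - 2)) - \<delta> < 0" using d by linarith
  have "(\<lambda>k::nat. real k powr (- (r / (r - 2)) - \<delta>)) \<longlonglongrightarrow> 0"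
    by (rule tendsto_neg_powr[OF neg filterlim_real_sequentially])
  then have "(\<lambda>k::nat. c * norm (real k powr (- (r / (r - 2)) - \<delta>))) \<longlonglongrightarrow> c * norm (0::real)"
    by (intro tendsto_intros)
  then have l: "(\<lambda>k::nat. c * norm (real k powr (- (r / (r - 2)) - \<delta>))) \<longlonglongrightarrow> 0" by simp
  show ?thesis by (rule Lim_null_comparison[OF c(2) l])
qed


definition nd :: "nat \<Rightarrow> nat \<Rightarrow> nat" where "nd s t = (if s \<le> t then t - s else s - t)"

lemma card_near: "card {t \<in> {1..T}. nd s t < K} \<le> 2 * K"
proof -
  have "{t \<in> {1..T}. nd s t < K} \<subseteq> {s - K ..< s + K}" unfolding nd_def by auto
  then have "card {t \<in> {1..T}. nd s t < K} \<le> card {s - K ..< s + K}" by (intro card_mono) auto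
  also have "\<dots> \<le> 2 * K" by simp
  finally show ?thesis .
qed

lemma row_bound:
  fixes b :: "nat \<Rightarrow> real"
  assumes bnd: "\<And>k. b k \<le> B" and small: "\<And>k. k \<ge> K \<Longrightarrow> b k \<le> \<epsilon>" and B: "B \<ge> 0" and e: "\<epsilon> \<ge> 0"
  shows "(\<Sum>t\<in>{1..T}. b (nd s t)) \<le> real T * \<epsilon> + 2 * real K * B"
proof -
  have "(\<Sum>t\<in>{1..T}. b (nd s t)) \<le> (\<Sum>t\<in>{1..T}. \<epsilon> + (if nd s t < K then B else 0))"
  proof (intro sum_mono)
    fix t show "b (nd s t) \<le> \<epsilon> + (if nd s t < K then B else 0)"
      using bnd[of "nd s t"] small[of "nd s t"] B e by (cases "nd s t < K") auto
  qed
  also have "\<dots> = real T * \<epsilon> + (\<Sum>t\<in>{1..T}. if nd s t < K then B else 0)"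
    by (simp add: sum.distrib)
  also have "(\<Sum>t\<in>{1..T}. if nd s t < K then B else 0) = (\<Sum>t\<in>{t \<in> {1..T}. nd s t < K}. B)"
    by (rule sum.inter_filter[symmetric]) simp
  also have "\<dots> = real (card {t \<in> {1..T}. nd s t < K}) * B" by simp
  also have "\<dots> \<le> real (2 * K) * B" using card_near[of T s K] B by (intro mult_right_mono) auto
  finally show ?thesis by simp
qed

lemma double_sum_cesaro:
  fixes b :: "nat \<Rightarrow> real"
  assumes nonneg: "\<And>k. 0 \<le> b k" and bnd: "\<And>k. b k \<le> B" and lim: "b \<longlonglongrightarrow> 0"
  shows "(\<lambda>T. (\<Sum>s\<in>{1..T}. \<Sum>t\<in>{1..T}. b (nd s t)) / (real T)^2) \<longlonglongrightarrow> 0"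
proof (rule LIMSEQ_I)
  fix r :: real assume r: "r > 0"
  have B: "B \<ge> 0" using nonneg[of 0] bnd[of 0] by linarith
  have r2: "r/2 > 0" using r by simp
  from LIMSEQ_D[OF lim r2] obtain K where K: "\<And>k. k \<ge> K \<Longrightarrow> norm (b k - 0) < r/2" by blast
  have small: "\<And>k. k \<ge> K \<Longrightarrow> b k \<le> r/2" using K nonneg by (simp add: less_imp_le)
  obtain N :: nat where N: "real N > 4 * real K * B / r" using reals_Archimedean2 by blast
  show "\<exists>N. \<forall>T\<ge>N. norm ((\<Sum>s\<in>{1..T}. \<Sum>t\<in>{1..T}. b (nd s t)) / (real T)^2 - 0) < r"
  proof (intro exI[of _ "Suc N"] allI impI)
    fix T assume T: "T \<ge> Suc N"
    then have T0: "real T > 0" by simp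
    have TN: "real T > 4 * real K * B / r" using N T by linarith
    then have TN': "4 * real K * B < r * real T" using r by (simp add: divide_less_eq mult.commute)
    have nn: "0 \<le> (\<Sum>s\<in>{1..T}. \<Sum>t\<in>{1..T}. b (nd s t))" by (intro sum_nonneg nonneg)
    have "(\<Sum>s\<in>{1..T}. \<Sum>t\<in>{1..T}. b (nd s t)) \<le> (\<Sum>s\<in>{1..T}. real T * (r/2) + 2 * real K * B)"
      by (intro sum_mono row_bound[OF bnd small B]) (use r in auto)
    also have "\<dots> = real T * (real T * (r/2) + 2 * real K * B)" by simp
    finally have le: "(\<Sum>s\<in>{1..T}. \<Sum>t\<in>{1..T}. b (nd s t)) \<le> real T * (real T * (r/2) + 2 * real K * B)" .
    have "real T * (real T * (r/2) + 2 * real K * B) < real T * (real T * r)"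
    proof (rule mult_strict_left_mono[OF _ T0])
      have "real T * (r/2) = (r * real T)/2" "real T * r = r * real T" by simp_all
      then show "real T * (r/2) + 2 * real K * B < real T * r" using TN' by linarith
    qed
    then have "(\<Sum>s\<in>{1..T}. \<Sum>t\<in>{1..T}. b (nd s t)) < (real T)^2 * r"
      using le by (simp add: power2_eq_square algebra_simps)
    then have "(\<Sum>s\<in>{1..T}. \<Sum>t\<in>{1..T}. b (nd s t)) / (real T)^2 < r"
      using T0 by (simp add: divide_less_eq mult.commute)
    then show "norm ((\<Sum>s\<in>{1..T}. \<Sum>t\<in>{1..T}. b (nd s t)) / (real T)^2 - 0) < r"
      using nn T0 by simp
  qed
qed


locale sp =
  fixes M :: "'a measure" and e :: "int \<Rightarrow> 'a \<Rightarrow> real" and f :: "real \<times> real \<Rightarrow> real"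
  assumes P: "prob_space M" and st: "strictly_stationary M e" and em: "\<And>t. e t \<in> borel_measurable M"
    and mix: "(\<lambda>k::nat. mixing_coeff M e (int k)) \<longlonglongrightarrow> 0"
    and fm: "f \<in> borel_measurable borel" and fi: "integrable M (\<lambda>\<omega>. f (e 0 \<omega>, e (-1) \<omega>))"
begin

sublocale prob_space M by (rule P)

declare em[measurable] fm[measurable]

definition Z :: "int \<Rightarrow> 'a \<Rightarrow> real" where "Z t \<omega> = f (e t \<omega>, e (t - 1) \<omega>)"
definition W :: "nat \<Rightarrow> int \<Rightarrow> 'a \<Rightarrow> real" where "W n t \<omega> = qz n (Z t \<omega>)"
definition mW :: "nat \<Rightarrow> real" where "mW n = expectation (W n 0)"
definition err :: "nat \<Rightarrow> real \<Rightarrow> real" where "err n x = 1 / real n + (if \<bar>x\<bar> > real n then \<bar>x\<bar> else 0)"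
definition u :: "nat \<Rightarrow> real" where "u n = expectation (\<lambda>\<omega>. err n (Z 0 \<omega>))"
definition bc :: "nat \<Rightarrow> nat \<Rightarrow> real" where
  "bc n k = \<bar>expectation (\<lambda>\<omega>. (W n 0 \<omega> - mW n) * (W n (int k) \<omega> - mW n))\<bar>"

lemma Z_meas[measurable]: "Z t \<in> borel_measurable M"
  unfolding Z_def by measurable

lemma W_meas[measurable]: "W n t \<in> borel_measurable M"
  unfolding W_def by measurable

lemma err_meas[measurable]: "err n \<in> borel_measurable borel"
  unfolding err_def by measurable

lemma stat1:
  fixes \<phi> :: "real \<Rightarrow> real"
  assumes [measurable]: "\<phi> \<in> borel_measurable borel"
  shows "expectation (\<lambda>\<omega>. \<phi> (Z t \<omega>)) = expectation (\<lambda>\<omega>. \<phi> (Z 0 \<omega>))"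
    and "integrable M (\<lambda>\<omega>. \<phi> (Z t \<omega>)) \<longleftrightarrow> integrable M (\<lambda>\<omega>. \<phi> (Z 0 \<omega>))"
proof -
  define G where "G = (\<lambda>x::int \<Rightarrow> real. \<phi> (f (x 0, x (-1))))"
  have Gm: "G \<in> borel_measurable (Pi\<^sub>M UNIV (\<lambda>_. borel))" unfolding G_def by measurable
  have e1: "G (\<lambda>s. e (s + t) \<omega>) = \<phi> (Z t \<omega>)" for t \<omega>
    unfolding G_def Z_def by (simp add: add.commute)
  show "expectation (\<lambda>\<omega>. \<phi> (Z t \<omega>)) = expectation (\<lambda>\<omega>. \<phi> (Z 0 \<omega>))"
    using stat_integral[OF st _ Gm, of t] e1[of t] e1[of 0] em by simp
  show "integrable M (\<lambda>\<omega>. \<phi> (Z t \<omega>)) \<longleftrightarrow> integrable M (\<lambda>\<omega>. \<phi> (Z 0 \<omega>))"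
    using stat_integrable[OF st _ Gm, of t] e1[of t] e1[of 0] em by simp
qed

lemma stat2:
  fixes g :: "real \<Rightarrow> real"
  assumes [measurable]: "g \<in> borel_measurable borel" and st_le: "s \<le> t"
  shows "expectation (\<lambda>\<omega>. g (Z s \<omega>) * g (Z t \<omega>)) = expectation (\<lambda>\<omega>. g (Z 0 \<omega>) * g (Z (t - s) \<omega>))"
proof -
  define k where "k = t - s"
  define G where "G = (\<lambda>x::int \<Rightarrow> real. g (f (x 0, x (-1))) * g (f (x k, x (k - 1))))"
  have Gm: "G \<in> borel_measurable (Pi\<^sub>M UNIV (\<lambda>_. borel))" unfolding G_def by measurable
  have e1: "G (\<lambda>r. e (r + h) \<omega>) = g (Z h \<omega>) * g (Z (k + h) \<omega>)" for h \<omega>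
    unfolding G_def Z_def by (simp add: algebra_simps)
  have "expectation (\<lambda>\<omega>. G (\<lambda>r. e (r + s) \<omega>)) = expectation (\<lambda>\<omega>. G (\<lambda>r. e r \<omega>))"
    using stat_integral[OF st _ Gm, of s] em by simp
  moreover have "(\<lambda>\<omega>. G (\<lambda>r. e r \<omega>)) = (\<lambda>\<omega>. G (\<lambda>r. e (r + 0) \<omega>))" by simp
  ultimately show ?thesis unfolding e1 k_def by (simp add: algebra_simps)
qed

lemma Z_integrable: "integrable M (Z t)"
proof -
  have "integrable M (\<lambda>\<omega>. (\<lambda>x. x) (Z 0 \<omega>))" using fi unfolding Z_def by simp
  then have "integrable M (\<lambda>\<omega>. (\<lambda>x. x) (Z t \<omega>))" using stat1(2)[of "\<lambda>x. x" t] by simp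
  then show ?thesis by simp
qed

lemma err_integrable: "integrable M (\<lambda>\<omega>. err n (Z t \<omega>))"
proof -
  have "integrable M (\<lambda>\<omega>. err n (Z t \<omega>))"
  proof (rule Bochner_Integration.integrable_bound[where f="\<lambda>\<omega>. 1 / real n + \<bar>Z t \<omega>\<bar>"])
    show "integrable M (\<lambda>\<omega>. 1 / real n + \<bar>Z t \<omega>\<bar>)" using Z_integrable[of t] by simp
    show "(\<lambda>\<omega>. err n (Z t \<omega>)) \<in> borel_measurable M" by measurable
    show "AE \<omega> in M. norm (err n (Z t \<omega>)) \<le> norm (1 / real n + \<bar>Z t \<omega>\<bar>)"
      by (intro AE_I2) (auto simp: err_def)
  qed
  then show ?thesis .
qed

lemma W_bound: "\<bar>W n t \<omega>\<bar> \<le> real n"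
proof (cases "n = 0")
  case True then show ?thesis by (simp add: W_def qz_def)
next
  case False then show ?thesis unfolding W_def by (intro qz_bound) simp
qed

lemma W_integrable: "integrable M (W n t)"
  by (rule integrable_const_bound[where B="real n"]) (auto intro!: AE_I2 W_bound)


lemma err_mean: "expectation (\<lambda>\<omega>. err n (Z t \<omega>)) = u n"
  unfolding u_def by (rule stat1(1)) measurable

lemma ZW_integrable: "integrable M (\<lambda>\<omega>. \<bar>Z t \<omega> - W n t \<omega>\<bar>)"
  using Z_integrable W_integrable by (intro integrable_abs Bochner_Integration.integrable_diff)

lemma ZW_err: assumes n: "n \<ge> 1" shows "expectation (\<lambda>\<omega>. \<bar>Z t \<omega> - W n t \<omega>\<bar>) \<le> u n"
proof -
  have "expectation (\<lambda>\<omega>. \<bar>Z t \<omega> - W n t \<omega>\<bar>) \<le> expectation (\<lambda>\<omega>. err n (Z t \<omega>))"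
    by (intro integral_mono ZW_integrable err_integrable) (simp add: W_def, unfold err_def, rule qz_err[OF n])
  then show ?thesis using err_mean by simp
qed

lemma W_mean: "expectation (W n t) = mW n"
proof -
  have "expectation (\<lambda>\<omega>. qz n (Z t \<omega>)) = expectation (\<lambda>\<omega>. qz n (Z 0 \<omega>))" by (rule stat1(1)) measurable
  then show ?thesis unfolding mW_def W_def by simp
qed

lemma mW_bound: "\<bar>mW n\<bar> \<le> real n"
proof -
  have "\<bar>mW n\<bar> \<le> expectation (\<lambda>\<omega>. \<bar>W n 0 \<omega>\<bar>)" unfolding mW_def
    using integral_norm_bound[of M "W n 0"] by simp
  also have "\<dots> \<le> expectation (\<lambda>\<omega>. real n)"
    by (intro integral_mono W_bound integrable_abs W_integrable) simp
  finally show ?thesis by (simp add: prob_space)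
qed

lemma u_lim: "u \<longlonglongrightarrow> 0"
proof -
  define s where "s = (\<lambda>n::nat. \<lambda>\<omega>. if \<bar>Z 0 \<omega>\<bar> > real n then \<bar>Z 0 \<omega>\<bar> else 0)"
  have sm: "\<And>n. s n \<in> borel_measurable M" unfolding s_def by measurable
  have sl: "AE \<omega> in M. (\<lambda>n. s n \<omega>) \<longlonglongrightarrow> 0"
  proof (intro AE_I2)
    fix \<omega>
    obtain N :: nat where N: "real N > \<bar>Z 0 \<omega>\<bar>" using reals_Archimedean2 by blast
    have "\<forall>n\<ge>N. s n \<omega> = 0" unfolding s_def using N by auto
    then show "(\<lambda>n. s n \<omega>) \<longlonglongrightarrow> 0" by (intro tendsto_eventually) (auto simp: eventually_sequentially)
  qed
  have "(\<lambda>n. expectation (s n)) \<longlonglongrightarrow> expectation (\<lambda>\<omega>. 0)"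
  proof (rule integral_dominated_convergence[where w="\<lambda>\<omega>. \<bar>Z 0 \<omega>\<bar>"])
    show "integrable M (\<lambda>\<omega>. \<bar>Z 0 \<omega>\<bar>)" using Z_integrable by simp
    show "AE \<omega> in M. norm (s n \<omega>) \<le> \<bar>Z 0 \<omega>\<bar>" for n by (intro AE_I2) (simp add: s_def)
  qed (use sm sl in auto)
  then have l1: "(\<lambda>n. expectation (s n)) \<longlonglongrightarrow> 0" by simp
  have l2: "(\<lambda>n::nat. 1 / real n) \<longlonglongrightarrow> 0" by (rule lim_const_over_n)
  have ue: "u n = 1 / real n + expectation (s n)" for n
  proof -
    have "u n = expectation (\<lambda>\<omega>. 1 / real n + s n \<omega>)" unfolding u_def err_def s_def by simp
    also have "\<dots> = expectation (\<lambda>\<omega>. 1 / real n) + expectation (s n)"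
    proof (rule Bochner_Integration.integral_add)
      show "integrable M (s n)"
        by (rule Bochner_Integration.integrable_bound[where f="\<lambda>\<omega>. \<bar>Z 0 \<omega>\<bar>"]) (use Z_integrable sm in \<open>auto simp: s_def intro!: AE_I2\<close>)
    qed simp
    finally show ?thesis by (simp add: prob_space)
  qed
  show ?thesis unfolding ue using tendsto_add[OF l2 l1] by simp
qed

lemma cov_eq: "expectation (\<lambda>\<omega>. (W n 0 \<omega> - mW n) * (W n k \<omega> - mW n))
   = expectation (\<lambda>\<omega>. W n 0 \<omega> * W n k \<omega>) - expectation (W n 0) * expectation (W n k)"
proof -
  have i1: "integrable M (\<lambda>\<omega>. W n 0 \<omega> * W n k \<omega>)"
    by (rule integrable_const_bound[where B="real n * real n"])
       (auto intro!: AE_I2 simp: abs_mult intro: mult_mono W_bound)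
  have "(\<lambda>\<omega>. (W n 0 \<omega> - mW n) * (W n k \<omega> - mW n)) =
      (\<lambda>\<omega>. W n 0 \<omega> * W n k \<omega> - (mW n * W n k \<omega> + mW n * W n 0 \<omega>) + mW n * mW n)"
    by (auto simp: algebra_simps)
  then have "expectation (\<lambda>\<omega>. (W n 0 \<omega> - mW n) * (W n k \<omega> - mW n)) =
      expectation (\<lambda>\<omega>. W n 0 \<omega> * W n k \<omega>) - (mW n * expectation (W n k) + mW n * expectation (W n 0)) + mW n * mW n"
    using i1 W_integrable by (simp add: prob_space)
  then show ?thesis using W_mean[of n 0] W_mean[of n k] by simp
qed

lemma bc_bound: "bc n k \<le> 4 * (real n)^2"
proof -
  have "bc n k \<le> expectation (\<lambda>\<omega>. \<bar>(W n 0 \<omega> - mW n) * (W n (int k) \<omega> - mW n)\<bar>)"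
    unfolding bc_def using integral_norm_bound[of M "\<lambda>\<omega>. (W n 0 \<omega> - mW n) * (W n (int k) \<omega> - mW n)"] by simp
  also have "\<dots> \<le> expectation (\<lambda>\<omega>. (2 * real n) * (2 * real n))"
  proof (rule integral_mono)
    have a1: "\<bar>W n t \<omega> - mW n\<bar> \<le> 2 * real n" for t \<omega>
      using abs_triangle_ineq4[of "W n t \<omega>" "mW n"] W_bound[of n t \<omega>] mW_bound[of n] by linarith
    have pb: "\<bar>(W n 0 \<omega> - mW n) * (W n (int k) \<omega> - mW n)\<bar> \<le> (2 * real n) * (2 * real n)" for \<omega>
      unfolding abs_mult by (intro mult_mono a1) auto
    show "integrable M (\<lambda>\<omega>. \<bar>(W n 0 \<omega> - mW n) * (W n (int k) \<omega> - mW n)\<bar>)"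
      by (rule integrable_const_bound[where B="(2 * real n) * (2 * real n)"]) (use pb in auto)
    fix \<omega> show "\<bar>(W n 0 \<omega> - mW n) * (W n (int k) \<omega> - mW n)\<bar> \<le> (2 * real n) * (2 * real n)"
      by (rule pb)
  qed simp
  finally show ?thesis by (simp add: power2_eq_square prob_space)
qed


lemma W_set_eq: "{\<omega> \<in> space M. W n t \<omega> = v} = {\<omega> \<in> space M. (\<lambda>p. qz n (f p)) (e t \<omega>, e (t - 1) \<omega>) = v}"
  by (simp add: W_def Z_def)

lemma bc_mix: assumes n: "n \<ge> 1" and k: "k \<ge> 1"
  shows "bc n k \<le> real (card (QV n)) * real (card (QV n)) * (real n * real n * mixing_coeff M e (int k - 1))"
proof -
  have qm: "(\<lambda>p. qz n (f p)) \<in> borel_measurable borel" by measurable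
  have "\<bar>expectation (\<lambda>\<omega>. W n 0 \<omega> * W n (int k) \<omega>) - expectation (W n 0) * expectation (W n (int k))\<bar>
      \<le> real (card (QV n)) * real (card (QV n)) * (real n * real n * mixing_coeff M e (int k - 1))"
  proof (rule cov_finite[OF W_meas W_meas QV_finite])
    show "\<And>\<omega>. W n 0 \<omega> \<in> QV n" "\<And>\<omega>. W n (int k) \<omega> \<in> QV n" unfolding W_def using n by (auto intro: qz_range)
    show "\<And>v. v \<in> QV n \<Longrightarrow> \<bar>v\<bar> \<le> real n" using n by (rule QV_bound)
    fix v w
    have A: "{\<omega> \<in> space M. W n 0 \<omega> = v} \<in> gen_sigma M e {..0}"
      unfolding W_set_eq by (rule set_in_gen[OF qm]) auto
    have B: "{\<omega> \<in> space M. W n (int k) \<omega> = w} \<in> gen_sigma M e {int k - 1..}"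
      unfolding W_set_eq by (rule set_in_gen[OF qm]) auto
    show "\<bar>prob ({\<omega> \<in> space M. W n 0 \<omega> = v} \<inter> {\<omega> \<in> space M. W n (int k) \<omega> = w}) -
          prob {\<omega> \<in> space M. W n 0 \<omega> = v} * prob {\<omega> \<in> space M. W n (int k) \<omega> = w}\<bar>
          \<le> mixing_coeff M e (int k - 1)"
      by (rule mixing_bound[OF P A B])
  qed
  then show ?thesis unfolding bc_def cov_eq .
qed

lemma bc_nonneg: "bc n k \<ge> 0" unfolding bc_def by simp

lemma bc_lim: assumes n: "n \<ge> 1" shows "bc n \<longlonglongrightarrow> 0"
proof -
  define C where "C = real (card (QV n)) * real (card (QV n)) * (real n * real n)"
  have m1: "(\<lambda>k. mixing_coeff M e (int (k + 1) - 1)) \<longlonglongrightarrow> 0" using mix by simp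
  then have m2: "(\<lambda>k::nat. mixing_coeff M e (int k - 1)) \<longlonglongrightarrow> 0" by (rule LIMSEQ_offset)
  then have m3: "(\<lambda>k::nat. C * mixing_coeff M e (int k - 1)) \<longlonglongrightarrow> 0"
    using tendsto_mult_right_zero by blast
  have ev: "eventually (\<lambda>k. norm (bc n k) \<le> C * mixing_coeff M e (int k - 1)) sequentially"
    unfolding eventually_sequentially
  proof (intro exI[of _ 1] allI impI)
    fix k :: nat assume "k \<ge> 1"
    then show "norm (bc n k) \<le> C * mixing_coeff M e (int k - 1)"
      using bc_mix[OF n, of k] bc_nonneg[of n k] unfolding C_def by (simp add: algebra_simps)
  qed
  show ?thesis by (rule Lim_null_comparison[OF ev m3])
qed


definition DW :: "nat \<Rightarrow> nat \<Rightarrow> 'a \<Rightarrow> real" where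
  "DW n T \<omega> = (\<Sum>t\<in>{1..T}. W n (int t) \<omega> - mW n)"

lemma DW_meas[measurable]: "DW n T \<in> borel_measurable M"
  unfolding DW_def by measurable

lemma Wc_prod_integrable: "integrable M (\<lambda>\<omega>. (W n a \<omega> - mW n) * (W n b \<omega> - mW n))"
proof -
  have a1: "\<bar>W n t \<omega> - mW n\<bar> \<le> 2 * real n" for t \<omega>
    using abs_triangle_ineq4[of "W n t \<omega>" "mW n"] W_bound[of n t \<omega>] mW_bound[of n] by linarith
  have pb: "\<bar>(W n a \<omega> - mW n) * (W n b \<omega> - mW n)\<bar> \<le> (2 * real n) * (2 * real n)" for \<omega>
    unfolding abs_mult by (intro mult_mono a1) auto
  show ?thesis by (rule integrable_const_bound[where B="(2 * real n) * (2 * real n)"]) (use pb in auto)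
qed

lemma cov_le: "expectation (\<lambda>\<omega>. (W n (int s) \<omega> - mW n) * (W n (int t) \<omega> - mW n)) \<le> bc n (nd s t)"
proof -
  have gm: "(\<lambda>x. qz n x - mW n) \<in> borel_measurable borel" by measurable
  have key: "expectation (\<lambda>\<omega>. (W n (int a) \<omega> - mW n) * (W n (int b) \<omega> - mW n)) \<le> bc n (b - a)"
    if ab: "a \<le> b" for a b
  proof -
    have "expectation (\<lambda>\<omega>. (W n (int a) \<omega> - mW n) * (W n (int b) \<omega> - mW n))
        = expectation (\<lambda>\<omega>. (\<lambda>x. qz n x - mW n) (Z (int a) \<omega>) * (\<lambda>x. qz n x - mW n) (Z (int b) \<omega>))"
      by (simp add: W_def)
    also have "\<dots> = expectation (\<lambda>\<omega>. (\<lambda>x. qz n x - mW n) (Z 0 \<omega>) * (\<lambda>x. qz n x - mW n) (Z (int b - int a) \<omega>))"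
      by (rule stat2[OF gm]) (use ab in simp)
    also have "int b - int a = int (b - a)" using ab by simp
    also have "expectation (\<lambda>\<omega>. (\<lambda>x. qz n x - mW n) (Z 0 \<omega>) * (\<lambda>x. qz n x - mW n) (Z (int (b - a)) \<omega>))
        = expectation (\<lambda>\<omega>. (W n 0 \<omega> - mW n) * (W n (int (b - a)) \<omega> - mW n))"
      by (simp add: W_def)
    also have "\<dots> \<le> bc n (b - a)" unfolding bc_def by simp
    finally show ?thesis .
  qed
  show ?thesis
  proof (cases "s \<le> t")
    case True then show ?thesis using key[OF True] by (simp add: nd_def)
  next
    case False
    then have "t \<le> s" by simp
    from key[OF this] show ?thesis using False by (simp add: nd_def mult.commute)
  qed
qed

lemma var_bound: "expectation (\<lambda>\<omega>. (DW n T \<omega>)^2) \<le> (\<Sum>s\<in>{1..T}. \<Sum>t\<in>{1..T}. bc n (nd s t))"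
proof -
  have "(\<lambda>\<omega>. (DW n T \<omega>)^2) = (\<lambda>\<omega>. \<Sum>s\<in>{1..T}. \<Sum>t\<in>{1..T}. (W n (int s) \<omega> - mW n) * (W n (int t) \<omega> - mW n))"
    unfolding DW_def power2_eq_square by (simp add: sum_product)
  then have "expectation (\<lambda>\<omega>. (DW n T \<omega>)^2) = (\<Sum>s\<in>{1..T}. \<Sum>t\<in>{1..T}. expectation (\<lambda>\<omega>. (W n (int s) \<omega> - mW n) * (W n (int t) \<omega> - mW n)))"
    apply simp
    apply (subst Bochner_Integration.integral_sum)
     apply (intro Bochner_Integration.integrable_sum Wc_prod_integrable)
    apply (intro sum.cong refl)
    apply (subst Bochner_Integration.integral_sum)
     apply (intro Wc_prod_integrable)
    apply (rule refl)
    done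
  also have "\<dots> \<le> (\<Sum>s\<in>{1..T}. \<Sum>t\<in>{1..T}. bc n (nd s t))"
    by (intro sum_mono cov_le)
  finally show ?thesis .
qed

lemma W_cheb: assumes n: "n \<ge> 1" and eta: "\<eta> > 0"
  shows "(\<lambda>T. prob {\<omega> \<in> space M. \<bar>DW n T \<omega> / real T\<bar> \<ge> \<eta>}) \<longlonglongrightarrow> 0"
proof -
  have DWi: "integrable M (\<lambda>\<omega>. (DW n T \<omega> / real T)^2)" for T
  proof -
    have "(\<lambda>\<omega>. (DW n T \<omega> / real T)^2) = (\<lambda>\<omega>. (\<Sum>s\<in>{1..T}. \<Sum>t\<in>{1..T}. (W n (int s) \<omega> - mW n) * (W n (int t) \<omega> - mW n)) / (real T)^2)"
      unfolding DW_def power2_eq_square by (simp add: sum_product)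
    moreover have "integrable M (\<lambda>\<omega>. (\<Sum>s\<in>{1..T}. \<Sum>t\<in>{1..T}. (W n (int s) \<omega> - mW n) * (W n (int t) \<omega> - mW n)) / (real T)^2)"
      by (intro integrable_divide Bochner_Integration.integrable_sum Wc_prod_integrable)
    ultimately show ?thesis by simp
  qed
  have le: "prob {\<omega> \<in> space M. \<bar>DW n T \<omega> / real T\<bar> \<ge> \<eta>}
      \<le> ((\<Sum>s\<in>{1..T}. \<Sum>t\<in>{1..T}. bc n (nd s t)) / (real T)^2) / \<eta>^2" for T
  proof -
    have "prob {\<omega> \<in> space M. \<bar>DW n T \<omega> / real T\<bar> \<ge> \<eta>} \<le> expectation (\<lambda>\<omega>. (DW n T \<omega> / real T)^2) / \<eta>^2"
      by (rule second_moment_method[OF _ DWi eta]) measurable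
    also have "expectation (\<lambda>\<omega>. (DW n T \<omega> / real T)^2) = expectation (\<lambda>\<omega>. (DW n T \<omega>)^2) / (real T)^2"
      by (simp add: power_divide)
    also have "\<dots> \<le> (\<Sum>s\<in>{1..T}. \<Sum>t\<in>{1..T}. bc n (nd s t)) / (real T)^2"
      by (intro divide_right_mono var_bound) simp
    finally show ?thesis using eta by (simp add: divide_right_mono)
  qed
  have "(\<lambda>T. ((\<Sum>s\<in>{1..T}. \<Sum>t\<in>{1..T}. bc n (nd s t)) / (real T)^2) / \<eta>^2) \<longlonglongrightarrow> 0 / \<eta>^2"
    by (rule tendsto_divide[OF double_sum_cesaro[OF bc_nonneg bc_bound bc_lim[OF n]] tendsto_const]) (use eta in simp)
  then have lim: "(\<lambda>T. ((\<Sum>s\<in>{1..T}. \<Sum>t\<in>{1..T}. bc n (nd s t)) / (real T)^2) / \<eta>^2) \<longlonglongrightarrow> 0" by simp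
  show ?thesis
    apply (rule tendsto_sandwich[where f="\<lambda>_. 0", OF _ _ tendsto_const lim])
     apply simp
    apply (rule always_eventually, rule allI, rule le)
    done
qed


lemma avg_err: assumes n: "n \<ge> 1" and T: "T \<ge> 1" and eta: "\<eta> > 0"
  shows "prob {\<omega> \<in> space M. (\<Sum>t\<in>{1..T}. \<bar>Z (int t) \<omega> - W n (int t) \<omega>\<bar>) / real T \<ge> \<eta>} \<le> u n / \<eta>"
proof -
  have i: "integrable M (\<lambda>\<omega>. (\<Sum>t\<in>{1..T}. \<bar>Z (int t) \<omega> - W n (int t) \<omega>\<bar>) / real T)"
    by (intro integrable_divide Bochner_Integration.integrable_sum ZW_integrable)
  have "prob {\<omega> \<in> space M. (\<Sum>t\<in>{1..T}. \<bar>Z (int t) \<omega> - W n (int t) \<omega>\<bar>) / real T \<ge> \<eta>}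
     \<le> expectation (\<lambda>\<omega>. (\<Sum>t\<in>{1..T}. \<bar>Z (int t) \<omega> - W n (int t) \<omega>\<bar>) / real T) / \<eta>"
    by (rule integral_Markov_inequality_measure[OF i _ _ eta]) (auto intro!: AE_I2 sum_nonneg)
  also have "expectation (\<lambda>\<omega>. (\<Sum>t\<in>{1..T}. \<bar>Z (int t) \<omega> - W n (int t) \<omega>\<bar>) / real T)
      = (\<Sum>t\<in>{1..T}. expectation (\<lambda>\<omega>. \<bar>Z (int t) \<omega> - W n (int t) \<omega>\<bar>)) / real T"
    by (simp add: Bochner_Integration.integral_sum ZW_integrable)
  also have "\<dots> \<le> (\<Sum>t\<in>{1..T}. u n) / real T"
    by (intro divide_right_mono sum_mono ZW_err[OF n]) simp
  also have "\<dots> = u n" using T by simp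
  finally show ?thesis using eta by (simp add: divide_right_mono)
qed

lemma wlln: "conv_prob M (\<lambda>T \<omega>. (\<Sum>t\<in>{1..T}. Z (int t) \<omega>) / real T) (expectation (Z 0))"
  unfolding conv_prob_def
proof (intro conjI allI impI)
  show "(\<lambda>\<omega>. (\<Sum>t\<in>{1..T}. Z (int t) \<omega>) / real T) \<in> borel_measurable M" for T by measurable
  fix \<eta> :: real assume eta: "\<eta> > 0"
  define \<mu> where "\<mu> = expectation (Z 0)"
  show "(\<lambda>T. prob {\<omega> \<in> space M. dist ((\<Sum>t\<in>{1..T}. Z (int t) \<omega>) / real T) (expectation (Z 0)) > \<eta>}) \<longlonglongrightarrow> 0"
  proof (rule LIMSEQ_I)
    fix r :: real assume r: "r > 0"
    define \<epsilon> where "\<epsilon> = min (\<eta>/3) (r * \<eta> / 6)"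
    have eps: "\<epsilon> > 0" unfolding \<epsilon>_def using eta r by simp
    from LIMSEQ_D[OF u_lim eps] obtain N0 where N0: "\<And>n. n \<ge> N0 \<Longrightarrow> norm (u n - 0) < \<epsilon>" by blast
    define n where "n = max 1 N0"
    have n: "n \<ge> 1" unfolding n_def by simp
    have un: "u n < \<epsilon>" using N0[of n] unfolding n_def by simp
    have eta3: "\<eta>/3 > 0" using eta by simp
    have r2: "r/2 > 0" using r by simp
    from LIMSEQ_D[OF W_cheb[OF n eta3] r2] obtain N1 where
      N1: "\<And>T. T \<ge> N1 \<Longrightarrow> norm (prob {\<omega> \<in> space M. \<bar>DW n T \<omega> / real T\<bar> \<ge> \<eta>/3} - 0) < r/2" by blast
    have mu: "\<bar>mW n - \<mu>\<bar> \<le> u n"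
    proof -
      have "mW n - \<mu> = expectation (\<lambda>\<omega>. W n 0 \<omega> - Z 0 \<omega>)"
        unfolding mW_def \<mu>_def using W_integrable Z_integrable by simp
      also have "\<bar>\<dots>\<bar> \<le> expectation (\<lambda>\<omega>. \<bar>W n 0 \<omega> - Z 0 \<omega>\<bar>)"
        using integral_norm_bound[of M "\<lambda>\<omega>. W n 0 \<omega> - Z 0 \<omega>"] by simp
      also have "\<dots> = expectation (\<lambda>\<omega>. \<bar>Z 0 \<omega> - W n 0 \<omega>\<bar>)" by (simp add: abs_minus_commute)
      also have "\<dots> \<le> u n" by (rule ZW_err[OF n])
      finally show ?thesis .
    qed
    show "\<exists>N. \<forall>T\<ge>N. norm (prob {\<omega> \<in> space M. dist ((\<Sum>t\<in>{1..T}. Z (int t) \<omega>) / real T) (expectation (Z 0)) > \<eta>} - 0) < r"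
    proof (intro exI[of _ "max 1 N1"] allI impI)
      fix T assume T: "T \<ge> max 1 N1"
      then have T1: "T \<ge> 1" and TN: "T \<ge> N1" by auto
      have Tpos: "real T > 0" using T1 by simp
      have dec: "(\<Sum>t\<in>{1..T}. Z (int t) \<omega>) / real T - \<mu> =
          (\<Sum>t\<in>{1..T}. Z (int t) \<omega> - W n (int t) \<omega>) / real T + DW n T \<omega> / real T + (mW n - \<mu>)" for \<omega>
      proof -
        have "(\<Sum>t\<in>{1..T}. Z (int t) \<omega>) = (\<Sum>t\<in>{1..T}. Z (int t) \<omega> - W n (int t) \<omega>) + DW n T \<omega> + real T * mW n"
          unfolding DW_def by (simp add: sum_subtractf)
        then show ?thesis using Tpos by (simp add: field_simps)
      qed
      have sub: "{\<omega> \<in> space M. dist ((\<Sum>t\<in>{1..T}. Z (int t) \<omega>) / real T) (expectation (Z 0)) > \<eta>} \<subseteq>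
          {\<omega> \<in> space M. (\<Sum>t\<in>{1..T}. \<bar>Z (int t) \<omega> - W n (int t) \<omega>\<bar>) / real T \<ge> \<eta>/3} \<union>
          {\<omega> \<in> space M. \<bar>DW n T \<omega> / real T\<bar> \<ge> \<eta>/3}"
      proof
        fix \<omega> assume w: "\<omega> \<in> {\<omega> \<in> space M. dist ((\<Sum>t\<in>{1..T}. Z (int t) \<omega>) / real T) (expectation (Z 0)) > \<eta>}"
        have big: "\<bar>(\<Sum>t\<in>{1..T}. Z (int t) \<omega>) / real T - \<mu>\<bar> > \<eta>" using w unfolding \<mu>_def dist_real_def by simp
        have a1: "\<bar>(\<Sum>t\<in>{1..T}. Z (int t) \<omega> - W n (int t) \<omega>) / real T\<bar> \<le> (\<Sum>t\<in>{1..T}. \<bar>Z (int t) \<omega> - W n (int t) \<omega>\<bar>) / real T"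
          using Tpos by (simp add: abs_divide divide_right_mono sum_abs)
        have a2: "\<bar>mW n - \<mu>\<bar> < \<eta>/3" using mu un unfolding \<epsilon>_def by simp
        have "\<bar>(\<Sum>t\<in>{1..T}. Z (int t) \<omega>) / real T - \<mu>\<bar> \<le>
            \<bar>(\<Sum>t\<in>{1..T}. Z (int t) \<omega> - W n (int t) \<omega>) / real T\<bar> + \<bar>DW n T \<omega> / real T\<bar> + \<bar>mW n - \<mu>\<bar>"
          unfolding dec by (rule order_trans[OF abs_triangle_ineq add_right_mono[OF abs_triangle_ineq]])
        then have "(\<Sum>t\<in>{1..T}. \<bar>Z (int t) \<omega> - W n (int t) \<omega>\<bar>) / real T \<ge> \<eta>/3 \<or> \<bar>DW n T \<omega> / real T\<bar> \<ge> \<eta>/3"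
          using big a1 a2 by linarith
        then show "\<omega> \<in> {\<omega> \<in> space M. (\<Sum>t\<in>{1..T}. \<bar>Z (int t) \<omega> - W n (int t) \<omega>\<bar>) / real T \<ge> \<eta>/3} \<union>
          {\<omega> \<in> space M. \<bar>DW n T \<omega> / real T\<bar> \<ge> \<eta>/3}" using w by auto
      qed
      have "prob {\<omega> \<in> space M. dist ((\<Sum>t\<in>{1..T}. Z (int t) \<omega>) / real T) (expectation (Z 0)) > \<eta>}
          \<le> prob ({\<omega> \<in> space M. (\<Sum>t\<in>{1..T}. \<bar>Z (int t) \<omega> - W n (int t) \<omega>\<bar>) / real T \<ge> \<eta>/3} \<union>
          {\<omega> \<in> space M. \<bar>DW n T \<omega> / real T\<bar> \<ge> \<eta>/3})"
        by (intro finite_measure_mono[OF sub]) measurable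
      also have "\<dots> \<le> prob {\<omega> \<in> space M. (\<Sum>t\<in>{1..T}. \<bar>Z (int t) \<omega> - W n (int t) \<omega>\<bar>) / real T \<ge> \<eta>/3} +
          prob {\<omega> \<in> space M. \<bar>DW n T \<omega> / real T\<bar> \<ge> \<eta>/3}"
        by (intro union_le) measurable
      also have "\<dots> < r/2 + r/2"
      proof (rule add_le_less_mono)
        have "prob {\<omega> \<in> space M. (\<Sum>t\<in>{1..T}. \<bar>Z (int t) \<omega> - W n (int t) \<omega>\<bar>) / real T \<ge> \<eta>/3} \<le> u n / (\<eta>/3)"
          by (rule avg_err[OF n T1 eta3])
        also have "u n / (\<eta>/3) \<le> r/2"
        proof -
          have "u n \<le> r * \<eta> / 6" using un unfolding \<epsilon>_def by simp
          then show ?thesis using eta by (simp add: divide_le_eq field_simps)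
        qed
        finally show "prob {\<omega> \<in> space M. (\<Sum>t\<in>{1..T}. \<bar>Z (int t) \<omega> - W n (int t) \<omega>\<bar>) / real T \<ge> \<eta>/3} \<le> r/2" .
        show "prob {\<omega> \<in> space M. \<bar>DW n T \<omega> / real T\<bar> \<ge> \<eta>/3} < r/2" using N1[OF TN] by simp
      qed
      finally show "norm (prob {\<omega> \<in> space M. dist ((\<Sum>t\<in>{1..T}. Z (int t) \<omega>) / real T) (expectation (Z 0)) > \<eta>} - 0) < r"
        by simp
    qed
  qed
qed

end


lemma sum_int_nat: "(\<Sum>t\<in>{1..int T}. g t) = (\<Sum>t\<in>{1..T}. g (int t))"
proof -
  have "(\<Sum>t\<in>{1..int T}. g t) = (\<Sum>t\<in>int ` {1..T}. g t)" by (simp add: image_int_atLeastAtMost)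
  also have "\<dots> = (\<Sum>t\<in>{1..T}. g (int t))" by (rule sum.reindex_cong[where l=int]) (auto simp: inj_on_def)
  finally show ?thesis .
qed

lemma amgm: "\<bar>a * b\<bar> \<le> (a^2 + b^2) / 2" for a b :: real
proof -
  have "0 \<le> (\<bar>a\<bar> - \<bar>b\<bar>)^2" by simp
  then have "2 * (\<bar>a\<bar> * \<bar>b\<bar>) \<le> \<bar>a\<bar>^2 + \<bar>b\<bar>^2" by (simp add: power2_eq_square algebra_simps)
  then show ?thesis by (simp add: abs_mult)
qed

lemma ineqR1:
  fixes a b p q x y d :: real
  assumes d: "d \<ge> 0" and x: "x \<ge> 0" and y: "y \<ge> 0" and p: "\<bar>p\<bar> \<le> x * d" and q: "\<bar>q\<bar> \<le> y * d"
  shows "\<bar>a * q + p * b + p * q\<bar> \<le> (d + d^2) * (a^2 + b^2 + x^2 + y^2)"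
proof -
  have h1: "\<bar>a * q\<bar> \<le> d * ((a^2 + y^2) / 2)"
  proof -
    have "\<bar>a * q\<bar> \<le> \<bar>a\<bar> * (y * d)" unfolding abs_mult by (rule mult_left_mono[OF q]) simp
    also have "\<dots> = d * \<bar>a * y\<bar>" using y by (simp add: abs_mult)
    also have "\<dots> \<le> d * ((a^2 + y^2) / 2)" by (rule mult_left_mono[OF amgm d])
    finally show ?thesis .
  qed
  have h2: "\<bar>p * b\<bar> \<le> d * ((x^2 + b^2) / 2)"
  proof -
    have "\<bar>p * b\<bar> \<le> (x * d) * \<bar>b\<bar>" unfolding abs_mult by (rule mult_right_mono[OF p]) simp
    also have "\<dots> = d * \<bar>x * b\<bar>" using x by (simp add: abs_mult)
    also have "\<dots> \<le> d * ((x^2 + b^2) / 2)" by (rule mult_left_mono[OF amgm d])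
    finally show ?thesis .
  qed
  have h3: "\<bar>p * q\<bar> \<le> d^2 * ((x^2 + y^2) / 2)"
  proof -
    have "\<bar>p * q\<bar> \<le> (x * d) * (y * d)" unfolding abs_mult using x y d by (intro mult_mono p q) auto
    also have "\<dots> = d^2 * \<bar>x * y\<bar>" using x y by (simp add: abs_mult power2_eq_square)
    also have "\<dots> \<le> d^2 * ((x^2 + y^2) / 2)" by (rule mult_left_mono[OF amgm]) simp
    finally show ?thesis .
  qed
  have s: "0 \<le> a^2" "0 \<le> b^2" "0 \<le> x^2" "0 \<le> y^2" "0 \<le> d^2" by simp_all
  have "\<bar>a * q + p * b + p * q\<bar> \<le> \<bar>a * q\<bar> + \<bar>p * b\<bar> + \<bar>p * q\<bar>" by linarith
  also have "\<dots> \<le> d * ((a^2 + y^2) / 2) + d * ((x^2 + b^2) / 2) + d^2 * ((x^2 + y^2) / 2)"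
    using h1 h2 h3 by linarith
  also have "\<dots> \<le> (d + d^2) * (a^2 + b^2 + x^2 + y^2)"
  proof -
    have "d * ((a^2 + y^2) / 2) + d * ((x^2 + b^2) / 2) = d * ((a^2 + b^2 + x^2 + y^2) / 2)"
      by (simp add: field_simps)
    also have "\<dots> \<le> d * (a^2 + b^2 + x^2 + y^2)" using s d by (intro mult_left_mono) auto
    finally have "d * ((a^2 + y^2) / 2) + d * ((x^2 + b^2) / 2) \<le> d * (a^2 + b^2 + x^2 + y^2)" .
    moreover have "d^2 * ((x^2 + y^2) / 2) \<le> d^2 * (a^2 + b^2 + x^2 + y^2)"
      using s by (intro mult_left_mono) auto
    moreover have "(d + d^2) * (a^2 + b^2 + x^2 + y^2) = d * (a^2 + b^2 + x^2 + y^2) + d^2 * (a^2 + b^2 + x^2 + y^2)"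
      by (rule distrib_right)
    ultimately show ?thesis by linarith
  qed
  finally show ?thesis .
qed

lemma ineqR2:
  fixes a b p x y d :: real
  assumes d: "d \<ge> 0" and x: "x \<ge> 0" and y: "y \<ge> 0" and p: "\<bar>p\<bar> \<le> x * d"
  shows "\<bar>2 * a * p + p^2\<bar> \<le> (d + d^2) * (a^2 + b^2 + x^2 + y^2)"
proof -
  have h1: "\<bar>2 * a * p\<bar> \<le> d * (a^2 + x^2)"
  proof -
    have "\<bar>2 * a * p\<bar> = (2 * \<bar>a\<bar>) * \<bar>p\<bar>" by (simp add: abs_mult)
    also have "\<dots> \<le> 2 * \<bar>a\<bar> * (x * d)" by (rule mult_left_mono[OF p]) simp
    also have "\<dots> = 2 * d * \<bar>a * x\<bar>" using x by (simp add: abs_mult)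
    also have "\<dots> \<le> 2 * d * ((a^2 + x^2) / 2)" by (rule mult_left_mono[OF amgm]) (use d in simp)
    finally show ?thesis by simp
  qed
  have h2: "\<bar>p^2\<bar> \<le> d^2 * x^2"
  proof -
    have "\<bar>p\<bar> * \<bar>p\<bar> \<le> (x * d) * (x * d)" using x d by (intro mult_mono p) auto
    then show ?thesis by (simp add: power2_eq_square abs_mult algebra_simps)
  qed
  have s: "0 \<le> a^2" "0 \<le> b^2" "0 \<le> x^2" "0 \<le> y^2" "0 \<le> d^2" by simp_all
  have "\<bar>2 * a * p + p^2\<bar> \<le> d * (a^2 + x^2) + d^2 * x^2" using h1 h2 by linarith
  also have "\<dots> \<le> (d + d^2) * (a^2 + b^2 + x^2 + y^2)"
  proof -
    have "d * (a^2 + x^2) \<le> d * (a^2 + b^2 + x^2 + y^2)" using s d by (intro mult_left_mono) auto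
    moreover have "d^2 * x^2 \<le> d^2 * (a^2 + b^2 + x^2 + y^2)" using s by (intro mult_left_mono) auto
    moreover have "(d + d^2) * (a^2 + b^2 + x^2 + y^2) = d * (a^2 + b^2 + x^2 + y^2) + d^2 * (a^2 + b^2 + x^2 + y^2)"
      by (rule distrib_right)
    ultimately show ?thesis by linarith
  qed
  finally show ?thesis .
qed


theorem lemma1:
  fixes M :: "'a measure" and e y :: "int \<Rightarrow> 'a \<Rightarrow> real"
    and X :: "int \<Rightarrow> 'a \<Rightarrow> real^'k" and \<beta> :: "real^'k"
  assumes P: "prob_space M"
    and model: "\<forall>t. \<forall>\<omega>\<in>space M. y t \<omega> = X t \<omega> \<bullet> \<beta> + e t \<omega>"
    and e_meas: "\<forall>t. e t \<in> borel_measurable M"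
    and X_meas: "\<forall>t. X t \<in> borel_measurable M"
    and moments_mixing: "\<exists>r>2. (\<forall>t. integrable M (\<lambda>\<omega>. \<bar>e t \<omega>\<bar> powr r)) \<and>
          (\<exists>\<delta>>0. (\<lambda>k::nat. mixing_coeff M e (int k))
                    \<in> O(\<lambda>k. real k powr (- (r / (r - 2)) - \<delta>)))"
    and zero_mean: "\<forall>t. integral\<^sup>L M (e t) = 0"
    and stat: "strictly_stationary M e"
    and gamma0: "acov M e 0 \<noteq> 0"
    and X_moments: "\<forall>j\<in>{0,1::int}. \<forall>i l. \<forall>t s.
          integrable M (\<lambda>\<omega>. X t \<omega> $ i * e (t - j) \<omega>) \<and>
          integrable M (\<lambda>\<omega>. X (t - j) \<omega> $ i * e t \<omega>) \<and>
          integrable M (\<lambda>\<omega>. X t \<omega> $ i * X (t - j) \<omega> $ l) \<and>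
          integral\<^sup>L M (\<lambda>\<omega>. X t \<omega> $ i * e (t - j) \<omega>) = integral\<^sup>L M (\<lambda>\<omega>. X s \<omega> $ i * e (s - j) \<omega>) \<and>
          integral\<^sup>L M (\<lambda>\<omega>. X (t - j) \<omega> $ i * e t \<omega>) = integral\<^sup>L M (\<lambda>\<omega>. X (s - j) \<omega> $ i * e s \<omega>) \<and>
          integral\<^sup>L M (\<lambda>\<omega>. X t \<omega> $ i * X (t - j) \<omega> $ l) = integral\<^sup>L M (\<lambda>\<omega>. X s \<omega> $ i * X (s - j) \<omega> $ l)"
    and consistent: "conv_prob M (\<lambda>T. ols X y T) \<beta>"
  shows "conv_prob M (\<lambda>T. rho_hat X y T) (acov M e 1 / acov M e 0)
       \<and> conv_prob M (\<lambda>T \<omega>. (y (int T + 1) \<omega> - pred X y T \<omega>) - e (int T + 1) \<omega>) 0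
       \<and> (\<forall>T::nat. integral\<^sup>L M (e (int T + 1)) = 0 \<and>
             integral\<^sup>L M (\<lambda>\<omega>. (e (int T + 1) \<omega> - integral\<^sup>L M (e (int T + 1)))^2) = acov M e 0)
       \<and> conv_prob M (\<lambda>T \<omega>. (y (int T + 1) \<omega> - pred_plus X y T \<omega>)
             - (e (int T + 1) \<omega> - (acov M e 1 / acov M e 0) * e (int T) \<omega>)) 0
       \<and> (\<forall>T::nat.
           integral\<^sup>L M (\<lambda>\<omega>. e (int T + 1) \<omega> - (acov M e 1 / acov M e 0) * e (int T) \<omega>) = 0 \<and>
           integral\<^sup>L M (\<lambda>\<omega>. (e (int T + 1) \<omega> - (acov M e 1 / acov M e 0) * e (int T) \<omega>
              - integral\<^sup>L M (\<lambda>\<omega>. e (int T + 1) \<omega> - (acov M e 1 / acov M e 0) * e (int T) \<omega>))^2)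
             = acov M e 0 * (1 - (acov M e 1 / acov M e 0)^2))"
proof -
  interpret prob_space M by (rule P)
  have em[measurable]: "\<And>t. e t \<in> borel_measurable M" using e_meas by simp
  have Xm[measurable]: "\<And>t. X t \<in> borel_measurable M" using X_meas by simp
  have ym[measurable]: "\<And>t. y t \<in> borel_measurable M"
  proof -
    fix t
    have "(\<lambda>\<omega>. X t \<omega> \<bullet> \<beta> + e t \<omega>) \<in> borel_measurable M" by measurable
    then show "y t \<in> borel_measurable M" using model by (subst measurable_cong[where g="\<lambda>\<omega>. X t \<omega> \<bullet> \<beta> + e t \<omega>"]) auto
  qed
  have olsm[measurable]: "\<And>T. ols X y T \<in> borel_measurable M" using consistent unfolding conv_prob_def by simp
  obtain r \<delta> where r: "r > 2" and eri: "\<And>t. integrable M (\<lambda>\<omega>. \<bar>e t \<omega>\<bar> powr r)" and d: "\<delta> > 0"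
    and bigo: "(\<lambda>k::nat. mixing_coeff M e (int k)) \<in> O(\<lambda>k. real k powr (- (r / (r - 2)) - \<delta>))"
    using moments_mixing by blast
  have mix0: "(\<lambda>k::nat. mixing_coeff M e (int k)) \<longlonglongrightarrow> 0" by (rule alpha_to_0[OF bigo r d])
  have e2i: "integrable M (\<lambda>\<omega>. (e t \<omega>)^2)" for t
  proof (rule Bochner_Integration.integrable_bound[where f="\<lambda>\<omega>. 1 + \<bar>e t \<omega>\<bar> powr r"])
    show "integrable M (\<lambda>\<omega>. 1 + \<bar>e t \<omega>\<bar> powr r)" using eri[of t] by simp
    show "(\<lambda>\<omega>. (e t \<omega>)^2) \<in> borel_measurable M" by measurable
    show "AE \<omega> in M. norm ((e t \<omega>)^2) \<le> norm (1 + \<bar>e t \<omega>\<bar> powr r)"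
    proof (intro AE_I2)
      fix \<omega>
      have "(e t \<omega>)^2 \<le> 1 + \<bar>e t \<omega>\<bar> powr r"
      proof (cases "\<bar>e t \<omega>\<bar> \<le> 1")
        case True
        then have "(e t \<omega>)^2 \<le> 1" by (simp add: abs_square_le_1)
        moreover have "0 \<le> \<bar>e t \<omega>\<bar> powr r" by simp
        ultimately show ?thesis by linarith
      next
        case False
        then have "(e t \<omega>)^2 = \<bar>e t \<omega>\<bar> powr 2" by (simp add: powr_numeral)
        also have "\<dots> \<le> \<bar>e t \<omega>\<bar> powr r" using False r by (intro powr_mono) auto
        finally show ?thesis by simp
      qed
      then show "norm ((e t \<omega>)^2) \<le> norm (1 + \<bar>e t \<omega>\<bar> powr r)" by simp
    qed
  qed
  have eprod_i: "integrable M (\<lambda>\<omega>. e a \<omega> * e b \<omega>)" for a b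
  proof (rule Bochner_Integration.integrable_bound[where f="\<lambda>\<omega>. ((e a \<omega>)^2 + (e b \<omega>)^2) / 2"])
    show "integrable M (\<lambda>\<omega>. ((e a \<omega>)^2 + (e b \<omega>)^2) / 2)" using e2i by simp
    show "(\<lambda>\<omega>. e a \<omega> * e b \<omega>) \<in> borel_measurable M" by measurable
    show "AE \<omega> in M. norm (e a \<omega> * e b \<omega>) \<le> norm (((e a \<omega>)^2 + (e b \<omega>)^2) / 2)"
    proof (intro AE_I2)
      fix \<omega>
      have "\<bar>e a \<omega> * e b \<omega>\<bar> \<le> ((e a \<omega>)^2 + (e b \<omega>)^2) / 2" by (rule amgm)
      moreover have "0 \<le> ((e a \<omega>)^2 + (e b \<omega>)^2) / 2" by simp
      ultimately show "norm (e a \<omega> * e b \<omega>) \<le> norm (((e a \<omega>)^2 + (e b \<omega>)^2) / 2)"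
        by (simp only: real_norm_def)
    qed
  qed
  have ei: "integrable M (e t)" for t
  proof (rule Bochner_Integration.integrable_bound[where f="\<lambda>\<omega>. 1 + (e t \<omega>)^2"])
    show "integrable M (\<lambda>\<omega>. 1 + (e t \<omega>)^2)" using e2i by simp
    show "AE \<omega> in M. norm (e t \<omega>) \<le> norm (1 + (e t \<omega>)^2)"
    proof (intro AE_I2)
      fix \<omega>
      have "0 \<le> (\<bar>e t \<omega>\<bar> - 1)^2" by simp
      then have "2 * \<bar>e t \<omega>\<bar> \<le> \<bar>e t \<omega>\<bar>^2 + 1" by (simp add: power2_diff)
      moreover have "\<bar>e t \<omega>\<bar>^2 = (e t \<omega>)^2" by simp
      moreover have "0 \<le> (e t \<omega>)^2" by simp
      ultimately have "\<bar>e t \<omega>\<bar> \<le> 1 + (e t \<omega>)^2" by linarith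
      then show "norm (e t \<omega>) \<le> norm (1 + (e t \<omega>)^2)" by simp
    qed
  qed simp
  have e2mean: "expectation (\<lambda>\<omega>. (e t \<omega>)^2) = acov M e 0" for t
  proof -
    define G where "G = (\<lambda>x::int \<Rightarrow> real. x 0 * x 0)"
    have Gm: "G \<in> borel_measurable (Pi\<^sub>M UNIV (\<lambda>_. borel))" unfolding G_def by measurable
    have "expectation (\<lambda>\<omega>. G (\<lambda>s. e (s + t) \<omega>)) = expectation (\<lambda>\<omega>. G (\<lambda>s. e s \<omega>))"
      by (rule stat_integral[OF stat e_meas Gm])
    then show ?thesis unfolding G_def acov_def by (simp add: power2_eq_square)
  qed
  have e1mean: "expectation (\<lambda>\<omega>. e t \<omega> * e (t - 1) \<omega>) = acov M e 1" for t
  proof -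
    define G where "G = (\<lambda>x::int \<Rightarrow> real. x 0 * x (-1))"
    have Gm: "G \<in> borel_measurable (Pi\<^sub>M UNIV (\<lambda>_. borel))" unfolding G_def by measurable
    have "expectation (\<lambda>\<omega>. G (\<lambda>s. e (s + t) \<omega>)) = expectation (\<lambda>\<omega>. G (\<lambda>s. e s \<omega>))"
      by (rule stat_integral[OF stat e_meas Gm])
    moreover have "(\<lambda>\<omega>. G (\<lambda>s. e (s + t) \<omega>)) = (\<lambda>\<omega>. e t \<omega> * e (t - 1) \<omega>)"
      unfolding G_def by (simp add: algebra_simps)
    ultimately show ?thesis unfolding G_def acov_def by simp
  qed
  have Xsq_i: "integrable M (\<lambda>\<omega>. X t \<omega> $ i * X t \<omega> $ i)" for t i
    using X_moments by auto
  have Xsq_m: "expectation (\<lambda>\<omega>. X t \<omega> $ i * X t \<omega> $ i) = expectation (\<lambda>\<omega>. X 0 \<omega> $ i * X 0 \<omega> $ i)" for t i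
  proof -
    have "\<forall>i l. \<forall>t s. integral\<^sup>L M (\<lambda>\<omega>. X t \<omega> $ i * X (t - 0) \<omega> $ l) = integral\<^sup>L M (\<lambda>\<omega>. X s \<omega> $ i * X (s - 0) \<omega> $ l)"
      using X_moments by blast
    then show ?thesis by simp
  qed
  define nX where "nX t \<omega> = (norm (X t \<omega>))^2" for t \<omega>
  define cX where "cX = (\<Sum>i\<in>UNIV. expectation (\<lambda>\<omega>. X 0 \<omega> $ i * X 0 \<omega> $ i))"
  have nX_eq: "nX t \<omega> = (\<Sum>i\<in>UNIV. X t \<omega> $ i * X t \<omega> $ i)" for t \<omega>
    unfolding nX_def power2_norm_eq_inner inner_vec_def by simp
  have nX_i: "integrable M (nX t)" for t
    unfolding nX_eq[abs_def] by (intro Bochner_Integration.integrable_sum Xsq_i)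
  have nX_m: "expectation (nX t) = cX" for t
  proof -
    have "expectation (nX t) = (\<Sum>i\<in>UNIV. expectation (\<lambda>\<omega>. X t \<omega> $ i * X t \<omega> $ i))"
      unfolding nX_eq[abs_def] by (rule Bochner_Integration.integral_sum) (rule Xsq_i)
    also have "\<dots> = cX" unfolding cX_def by (rule sum.cong[OF refl Xsq_m])
    finally show ?thesis .
  qed
  have nX_meas[measurable]: "nX t \<in> borel_measurable M" for t unfolding nX_def by measurable
  define dd where "dd T \<omega> = norm (\<beta> - ols X y T \<omega>)" for T \<omega>
  define DD where "DD T \<omega> = dd T \<omega> + (dd T \<omega>)^2" for T \<omega>
  have dd_meas[measurable]: "dd T \<in> borel_measurable M" for T unfolding dd_def by measurable
  have DD_meas[measurable]: "DD T \<in> borel_measurable M" for T unfolding DD_def by measurable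
  have DD_conv: "conv_prob M DD 0"
  proof -
    have "conv_prob M (\<lambda>T \<omega>. (\<lambda>v. norm (\<beta> - v) + (norm (\<beta> - v))^2) (ols X y T \<omega>)) ((\<lambda>v. norm (\<beta> - v) + (norm (\<beta> - v))^2) \<beta>)"
      by (rule conv_prob_cont1[OF P consistent]) (auto intro!: continuous_intros)
    then show ?thesis unfolding DD_def dd_def by simp
  qed
  have dd_nonneg: "dd T \<omega> \<ge> 0" for T \<omega> unfolding dd_def by simp
  have resid_eq: "resid X y T t \<omega> = e t \<omega> + X t \<omega> \<bullet> (\<beta> - ols X y T \<omega>)" if "\<omega> \<in> space M" for T t \<omega>
    using model that unfolding resid_def by (simp add: inner_diff_right)
  have Xd: "\<bar>X t \<omega> \<bullet> (\<beta> - ols X y T \<omega>)\<bar> \<le> norm (X t \<omega>) * dd T \<omega>" for t T \<omega>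
    unfolding dd_def by (rule Cauchy_Schwarz_ineq2)
  define q where "q t \<omega> = (e (t - 1) \<omega>)^2 + (e t \<omega>)^2 + nX (t - 1) \<omega> + nX t \<omega>" for t \<omega>
  define S where "S T \<omega> = (\<Sum>t\<in>{1..T}. q (int t) \<omega>) / real T" for T \<omega>
  have q_meas[measurable]: "q t \<in> borel_measurable M" for t unfolding q_def by measurable
  have S_meas[measurable]: "S T \<in> borel_measurable M" for T unfolding S_def by measurable
  have q_nonneg: "q t \<omega> \<ge> 0" for t \<omega> unfolding q_def nX_def by simp
  have q_i: "integrable M (q t)" for t unfolding q_def[abs_def] using e2i nX_i by simp
  have q_m: "expectation (q t) = 2 * acov M e 0 + 2 * cX" for t
    unfolding q_def[abs_def] using e2i nX_i e2mean nX_m by simp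
  have S_bip: "bip M S"
  proof (rule bip_moment[OF P])
    show "\<forall>T. integrable M (\<lambda>\<omega>. \<bar>S T \<omega>\<bar>)" unfolding S_def using q_i by auto
    show "\<forall>T. S T \<in> borel_measurable M" by simp
    show "\<forall>T. expectation (\<lambda>\<omega>. \<bar>S T \<omega>\<bar>) \<le> \<bar>2 * acov M e 0 + 2 * cX\<bar>"
    proof
      fix T
      have "expectation (\<lambda>\<omega>. \<bar>S T \<omega>\<bar>) = expectation (S T)"
        unfolding S_def using q_nonneg by (intro Bochner_Integration.integral_cong refl) (simp add: sum_nonneg)
      also have "\<dots> = (\<Sum>t\<in>{1..T}. expectation (q (int t))) / real T"
        unfolding S_def using q_i by (simp add: Bochner_Integration.integral_sum)
      also have "\<dots> = real T * (2 * acov M e 0 + 2 * cX) / real T" by (simp add: q_m)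
      also have "\<dots> \<le> \<bar>2 * acov M e 0 + 2 * cX\<bar>" by (cases "T = 0") auto
      finally show "expectation (\<lambda>\<omega>. \<bar>S T \<omega>\<bar>) \<le> \<bar>2 * acov M e 0 + 2 * cX\<bar>" .
    qed
  qed
  have SD_conv: "conv_prob M (\<lambda>T \<omega>. S T \<omega> * DD T \<omega>) 0"
    by (rule bip_mult_conv0[OF P S_bip _ DD_conv]) simp
  interpret S1: sp M e "\<lambda>p. fst p * snd p"
  proof
    show "(\<lambda>p::real \<times> real. fst p * snd p) \<in> borel_measurable borel" by (intro borel_measurable_continuous_onI continuous_intros)
    show "integrable M (\<lambda>\<omega>. fst (e 0 \<omega>, e (-1) \<omega>) * snd (e 0 \<omega>, e (-1) \<omega>))" using eprod_i by simp
  qed (use P stat em mix0 in auto)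
  interpret S0: sp M e "\<lambda>p. (snd p)^2"
  proof
    show "(\<lambda>p::real \<times> real. (snd p)^2) \<in> borel_measurable borel" by (intro borel_measurable_continuous_onI continuous_intros)
    show "integrable M (\<lambda>\<omega>. (snd (e 0 \<omega>, e (-1) \<omega>))^2)" using e2i by simp
  qed (use P stat em mix0 in auto)
  define A1 where "A1 T \<omega> = (\<Sum>t\<in>{1..T}. e (int t) \<omega> * e (int t - 1) \<omega>) / real T" for T \<omega>
  define A0 where "A0 T \<omega> = (\<Sum>t\<in>{1..T}. (e (int t - 1) \<omega>)^2) / real T" for T \<omega>
  have A1_conv: "conv_prob M A1 (acov M e 1)"
  proof -
    have "conv_prob M (\<lambda>T \<omega>. (\<Sum>t\<in>{1..T}. S1.Z (int t) \<omega>) / real T) (expectation (S1.Z 0))" by (rule S1.wlln)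
    moreover have "expectation (S1.Z 0) = acov M e 1" unfolding S1.Z_def using e1mean[of 0] by simp
    ultimately show ?thesis unfolding A1_def S1.Z_def by simp
  qed
  have A0_conv: "conv_prob M A0 (acov M e 0)"
  proof -
    have "conv_prob M (\<lambda>T \<omega>. (\<Sum>t\<in>{1..T}. S0.Z (int t) \<omega>) / real T) (expectation (S0.Z 0))" by (rule S0.wlln)
    moreover have "expectation (S0.Z 0) = acov M e 0" unfolding S0.Z_def using e2mean[of "-1"] by simp
    ultimately show ?thesis unfolding A0_def S0.Z_def by simp
  qed
  define NN where "NN T \<omega> = (\<Sum>t\<in>{1..T}. resid X y T (int t - 1) \<omega> * resid X y T (int t) \<omega>) / real T" for T \<omega>
  define DN where "DN T \<omega> = (\<Sum>t\<in>{1..T}. (resid X y T (int t - 1) \<omega>)^2) / real T" for T \<omega>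
  have resid_meas[measurable]: "resid X y T t \<in> borel_measurable M" for T t unfolding resid_def by measurable
  have NN_meas[measurable]: "NN T \<in> borel_measurable M" for T unfolding NN_def by measurable
  have DN_meas[measurable]: "DN T \<in> borel_measurable M" for T unfolding DN_def by measurable
  have A1_meas[measurable]: "A1 T \<in> borel_measurable M" for T unfolding A1_def by measurable
  have A0_meas[measurable]: "A0 T \<in> borel_measurable M" for T unfolding A0_def by measurable
  have nXn: "nX t \<omega> = (norm (X t \<omega>))^2" for t \<omega> unfolding nX_def ..
  have term1: "\<bar>resid X y T (t - 1) \<omega> * resid X y T t \<omega> - e t \<omega> * e (t - 1) \<omega>\<bar> \<le> DD T \<omega> * q t \<omega>"
    if w: "\<omega> \<in> space M" for T t \<omega>
  proof -
    let ?a = "e (t - 1) \<omega>" and ?b = "e t \<omega>"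
    let ?p = "X (t - 1) \<omega> \<bullet> (\<beta> - ols X y T \<omega>)" and ?q = "X t \<omega> \<bullet> (\<beta> - ols X y T \<omega>)"
    have "resid X y T (t - 1) \<omega> * resid X y T t \<omega> - e t \<omega> * e (t - 1) \<omega> = ?a * ?q + ?p * ?b + ?p * ?q"
      unfolding resid_eq[OF w] by (simp add: algebra_simps)
    also have "\<bar>\<dots>\<bar> \<le> (dd T \<omega> + (dd T \<omega>)^2) * (?a^2 + ?b^2 + (norm (X (t - 1) \<omega>))^2 + (norm (X t \<omega>))^2)"
      by (rule ineqR1[OF dd_nonneg norm_ge_zero norm_ge_zero Xd Xd])
    also have "\<dots> = DD T \<omega> * q t \<omega>" unfolding DD_def q_def nXn by simp
    finally show ?thesis .
  qed
  have term0: "\<bar>(resid X y T (t - 1) \<omega>)^2 - (e (t - 1) \<omega>)^2\<bar> \<le> DD T \<omega> * q t \<omega>"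
    if w: "\<omega> \<in> space M" for T t \<omega>
  proof -
    let ?a = "e (t - 1) \<omega>" and ?b = "e t \<omega>"
    let ?p = "X (t - 1) \<omega> \<bullet> (\<beta> - ols X y T \<omega>)"
    have "(resid X y T (t - 1) \<omega>)^2 - (e (t - 1) \<omega>)^2 = 2 * ?a * ?p + ?p^2"
      unfolding resid_eq[OF w] by (simp add: algebra_simps power2_eq_square)
    also have "\<bar>\<dots>\<bar> \<le> (dd T \<omega> + (dd T \<omega>)^2) * (?a^2 + ?b^2 + (norm (X (t - 1) \<omega>))^2 + (norm (X t \<omega>))^2)"
      by (rule ineqR2[OF dd_nonneg norm_ge_zero norm_ge_zero Xd])
    also have "\<dots> = DD T \<omega> * q t \<omega>" unfolding DD_def q_def nXn by simp
    finally show ?thesis .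
  qed
  have avg_bound: "\<bar>(\<Sum>t\<in>{1..T}. g t) / real T\<bar> \<le> DD T \<omega> * S T \<omega>"
    if "\<And>t. \<bar>g t\<bar> \<le> DD T \<omega> * q (int t) \<omega>" for g :: "nat \<Rightarrow> real" and T \<omega>
  proof -
    have "\<bar>\<Sum>t\<in>{1..T}. g t\<bar> \<le> (\<Sum>t\<in>{1..T}. DD T \<omega> * q (int t) \<omega>)"
      by (rule order_trans[OF sum_abs sum_mono]) (rule that)
    then have "\<bar>\<Sum>t\<in>{1..T}. g t\<bar> / real T \<le> (\<Sum>t\<in>{1..T}. DD T \<omega> * q (int t) \<omega>) / real T"
      by (rule divide_right_mono) simp
    then show ?thesis unfolding S_def by (simp add: sum_distrib_left[symmetric])
  qed
  have R1: "conv_prob M (\<lambda>T \<omega>. NN T \<omega> - A1 T \<omega>) 0"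
  proof (rule conv_prob_dominated[OF P SD_conv])
    show "\<forall>T. (\<lambda>\<omega>. NN T \<omega> - A1 T \<omega>) \<in> borel_measurable M" by simp
    fix T \<omega> assume w: "\<omega> \<in> space M"
    have "NN T \<omega> - A1 T \<omega> = (\<Sum>t\<in>{1..T}. resid X y T (int t - 1) \<omega> * resid X y T (int t) \<omega> - e (int t) \<omega> * e (int t - 1) \<omega>) / real T"
      unfolding NN_def A1_def by (simp add: sum_subtractf diff_divide_distrib)
    also have "\<bar>\<dots>\<bar> \<le> DD T \<omega> * S T \<omega>" by (rule avg_bound) (rule term1[OF w])
    finally show "\<bar>NN T \<omega> - A1 T \<omega>\<bar> \<le> S T \<omega> * DD T \<omega>" by (simp add: mult.commute)
  qed
  have R0: "conv_prob M (\<lambda>T \<omega>. DN T \<omega> - A0 T \<omega>) 0"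
  proof (rule conv_prob_dominated[OF P SD_conv])
    show "\<forall>T. (\<lambda>\<omega>. DN T \<omega> - A0 T \<omega>) \<in> borel_measurable M" by simp
    fix T \<omega> assume w: "\<omega> \<in> space M"
    have "DN T \<omega> - A0 T \<omega> = (\<Sum>t\<in>{1..T}. (resid X y T (int t - 1) \<omega>)^2 - (e (int t - 1) \<omega>)^2) / real T"
      unfolding DN_def A0_def by (simp add: sum_subtractf diff_divide_distrib)
    also have "\<bar>\<dots>\<bar> \<le> DD T \<omega> * S T \<omega>" by (rule avg_bound) (rule term0[OF w])
    finally show "\<bar>DN T \<omega> - A0 T \<omega>\<bar> \<le> S T \<omega> * DD T \<omega>" by (simp add: mult.commute)
  qed
  have NN_conv: "conv_prob M NN (acov M e 1)"
  proof -
    have "conv_prob M (\<lambda>T \<omega>. A1 T \<omega> + (NN T \<omega> - A1 T \<omega>)) (acov M e 1 + 0)"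
      by (rule conv_prob_cont2[OF P A1_conv R1, where g="(+)"]) (auto intro!: continuous_intros)
    then show ?thesis by simp
  qed
  have DN_conv: "conv_prob M DN (acov M e 0)"
  proof -
    have "conv_prob M (\<lambda>T \<omega>. A0 T \<omega> + (DN T \<omega> - A0 T \<omega>)) (acov M e 0 + 0)"
      by (rule conv_prob_cont2[OF P A0_conv R0, where g="(+)"]) (auto intro!: continuous_intros)
    then show ?thesis by simp
  qed
  have rho_eq: "rho_hat X y T \<omega> = NN T \<omega> / DN T \<omega>" for T \<omega>
    unfolding rho_hat_def NN_def DN_def sum_int_nat by (cases "T = 0") auto
  have part1: "conv_prob M (\<lambda>T. rho_hat X y T) (acov M e 1 / acov M e 0)"
  proof -
    have "conv_prob M (\<lambda>T \<omega>. NN T \<omega> / DN T \<omega>) (acov M e 1 / acov M e 0)"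
      by (rule conv_prob_cont2[OF P NN_conv DN_conv, where g="(/)"]) (use gamma0 in \<open>auto intro!: continuous_intros\<close>)
    then show ?thesis unfolding rho_eq[abs_def] .
  qed
  have absq: "\<bar>z\<bar> \<le> 1 + z^2" for z :: real
  proof -
    have "0 \<le> (\<bar>z\<bar> - 1)^2" by simp
    then have "2 * \<bar>z\<bar> \<le> \<bar>z\<bar>^2 + 1" by (simp add: power2_diff)
    moreover have "\<bar>z\<bar>^2 = z^2" by simp
    moreover have "0 \<le> z^2" by simp
    ultimately show ?thesis by linarith
  qed
  have dd_conv: "conv_prob M dd 0"
  proof -
    have "conv_prob M (\<lambda>T \<omega>. (\<lambda>v. norm (\<beta> - v)) (ols X y T \<omega>)) ((\<lambda>v. norm (\<beta> - v)) \<beta>)"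
      by (rule conv_prob_cont1[OF P consistent]) (auto intro!: continuous_intros)
    then show ?thesis unfolding dd_def by simp
  qed
  have Xd_conv: "conv_prob M (\<lambda>T \<omega>. X (\<tau> T) \<omega> \<bullet> (\<beta> - ols X y T \<omega>)) 0" for \<tau> :: "nat \<Rightarrow> int"
  proof -
    have nXi: "integrable M (\<lambda>\<omega>. norm (X t \<omega>))" for t
    proof (rule Bochner_Integration.integrable_bound[where f="\<lambda>\<omega>. 1 + nX t \<omega>"])
      show "integrable M (\<lambda>\<omega>. 1 + nX t \<omega>)" using nX_i by simp
      show "AE \<omega> in M. norm (norm (X t \<omega>)) \<le> norm (1 + nX t \<omega>)"
      proof (intro AE_I2)
        fix \<omega> show "norm (norm (X t \<omega>)) \<le> norm (1 + nX t \<omega>)"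
          using absq[of "norm (X t \<omega>)"] unfolding nX_def by simp
      qed
    qed simp
    have bX: "bip M (\<lambda>T \<omega>. norm (X (\<tau> T) \<omega>))"
    proof (rule bip_moment[OF P])
      show "\<forall>T. integrable M (\<lambda>\<omega>. \<bar>norm (X (\<tau> T) \<omega>)\<bar>)" using nXi by simp
      show "\<forall>T. (\<lambda>\<omega>. norm (X (\<tau> T) \<omega>)) \<in> borel_measurable M" by simp
      show "\<forall>T. expectation (\<lambda>\<omega>. \<bar>norm (X (\<tau> T) \<omega>)\<bar>) \<le> 1 + cX"
      proof
        fix T
        have "expectation (\<lambda>\<omega>. \<bar>norm (X (\<tau> T) \<omega>)\<bar>) \<le> expectation (\<lambda>\<omega>. 1 + nX (\<tau> T) \<omega>)"
        proof (rule integral_mono)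
          fix \<omega> show "\<bar>norm (X (\<tau> T) \<omega>)\<bar> \<le> 1 + nX (\<tau> T) \<omega>"
            using absq[of "norm (X (\<tau> T) \<omega>)"] unfolding nX_def by simp
        qed (use nXi nX_i in auto)
        also have "\<dots> = 1 + cX" using nX_i nX_m by (simp add: prob_space)
        finally show "expectation (\<lambda>\<omega>. \<bar>norm (X (\<tau> T) \<omega>)\<bar>) \<le> 1 + cX" .
      qed
    qed
    have "conv_prob M (\<lambda>T \<omega>. norm (X (\<tau> T) \<omega>) * dd T \<omega>) 0"
      by (rule bip_mult_conv0[OF P bX _ dd_conv]) simp
    then show ?thesis
    proof (rule conv_prob_dominated[OF P])
      show "\<forall>T. (\<lambda>\<omega>. X (\<tau> T) \<omega> \<bullet> (\<beta> - ols X y T \<omega>)) \<in> borel_measurable M" by simp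
    qed (rule Xd)
  qed
  have part2: "conv_prob M (\<lambda>T \<omega>. (y (int T + 1) \<omega> - pred X y T \<omega>) - e (int T + 1) \<omega>) 0"
  proof (rule conv_prob_cong[OF Xd_conv[of "\<lambda>T. int T + 1"]])
    show "(\<lambda>\<omega>. (y (int T + 1) \<omega> - pred X y T \<omega>) - e (int T + 1) \<omega>) \<in> borel_measurable M" for T
      unfolding pred_def by measurable
    fix T \<omega> assume "\<omega> \<in> space M"
    then show "(y (int T + 1) \<omega> - pred X y T \<omega>) - e (int T + 1) \<omega> = X (int T + 1) \<omega> \<bullet> (\<beta> - ols X y T \<omega>)"
      using model unfolding pred_def by (simp add: inner_diff_right)
  qed
  define \<rho> where "\<rho> = acov M e 1 / acov M e 0"
  have rho_meas[measurable]: "rho_hat X y T \<in> borel_measurable M" for T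
    using part1 unfolding conv_prob_def by simp
  have U1: "conv_prob M (\<lambda>T \<omega>. X (int T + 1) \<omega> \<bullet> (\<beta> - ols X y T \<omega>)) 0" by (rule Xd_conv)
  have U2: "conv_prob M (\<lambda>T \<omega>. rho_hat X y T \<omega> * (X (int T) \<omega> \<bullet> (\<beta> - ols X y T \<omega>))) 0"
  proof -
    have "conv_prob M (\<lambda>T \<omega>. rho_hat X y T \<omega> * (X (int T) \<omega> \<bullet> (\<beta> - ols X y T \<omega>))) (\<rho> * 0)"
      by (rule conv_prob_cont2[OF P part1[folded \<rho>_def] Xd_conv[of int], where g="(*)"])
         (auto intro!: continuous_intros)
    then show ?thesis by simp
  qed
  have eT_bip: "bip M (\<lambda>T \<omega>. e (int T) \<omega>)"
  proof (rule bip_moment[OF P])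
    show "\<forall>T. integrable M (\<lambda>\<omega>. \<bar>e (int T) \<omega>\<bar>)" using ei by simp
    show "\<forall>T. (\<lambda>\<omega>. e (int T) \<omega>) \<in> borel_measurable M" by simp
    show "\<forall>T. expectation (\<lambda>\<omega>. \<bar>e (int T) \<omega>\<bar>) \<le> 1 + acov M e 0"
    proof
      fix T
      have "expectation (\<lambda>\<omega>. \<bar>e (int T) \<omega>\<bar>) \<le> expectation (\<lambda>\<omega>. 1 + (e (int T) \<omega>)^2)"
      proof (rule integral_mono)
        fix \<omega> show "\<bar>e (int T) \<omega>\<bar> \<le> 1 + (e (int T) \<omega>)^2" by (rule absq)
      qed (use ei e2i in auto)
      also have "\<dots> = 1 + acov M e 0" using e2i e2mean by (simp add: prob_space)
      finally show "expectation (\<lambda>\<omega>. \<bar>e (int T) \<omega>\<bar>) \<le> 1 + acov M e 0" .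
    qed
  qed
  have U3: "conv_prob M (\<lambda>T \<omega>. e (int T) \<omega> * (\<rho> - rho_hat X y T \<omega>)) 0"
  proof (rule bip_mult_conv0[OF P eT_bip])
    show "\<forall>T. (\<lambda>\<omega>. e (int T) \<omega>) \<in> borel_measurable M" by simp
    have "conv_prob M (\<lambda>T \<omega>. (\<lambda>x. \<rho> - x) (rho_hat X y T \<omega>)) ((\<lambda>x. \<rho> - x) \<rho>)"
      by (rule conv_prob_cont1[OF P part1[folded \<rho>_def]]) (auto intro!: continuous_intros)
    then show "conv_prob M (\<lambda>T \<omega>. \<rho> - rho_hat X y T \<omega>) 0" by simp
  qed
  have U12: "conv_prob M (\<lambda>T \<omega>. X (int T + 1) \<omega> \<bullet> (\<beta> - ols X y T \<omega>) - rho_hat X y T \<omega> * (X (int T) \<omega> \<bullet> (\<beta> - ols X y T \<omega>))) (0 - 0)"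
    by (rule conv_prob_cont2[OF P U1 U2, where g="(-)"]) (auto intro!: continuous_intros)
  have U123: "conv_prob M (\<lambda>T \<omega>. (X (int T + 1) \<omega> \<bullet> (\<beta> - ols X y T \<omega>) - rho_hat X y T \<omega> * (X (int T) \<omega> \<bullet> (\<beta> - ols X y T \<omega>)))
      + e (int T) \<omega> * (\<rho> - rho_hat X y T \<omega>)) ((0 - 0) + 0)"
    by (rule conv_prob_cont2[OF P U12 U3, where g="(+)"]) (auto intro!: continuous_intros)
  have part3: "conv_prob M (\<lambda>T \<omega>. (y (int T + 1) \<omega> - pred_plus X y T \<omega>)
             - (e (int T + 1) \<omega> - \<rho> * e (int T) \<omega>)) 0"
  proof (rule conv_prob_cong[OF U123[simplified]])
    show "(\<lambda>\<omega>. (y (int T + 1) \<omega> - pred_plus X y T \<omega>) - (e (int T + 1) \<omega> - \<rho> * e (int T) \<omega>)) \<in> borel_measurable M" for T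
      unfolding pred_plus_def pred_def by measurable
    fix T \<omega> assume w: "\<omega> \<in> space M"
    show "(y (int T + 1) \<omega> - pred_plus X y T \<omega>) - (e (int T + 1) \<omega> - \<rho> * e (int T) \<omega>) =
      X (int T + 1) \<omega> \<bullet> (\<beta> - ols X y T \<omega>) - rho_hat X y T \<omega> * (X (int T) \<omega> \<bullet> (\<beta> - ols X y T \<omega>))
      + e (int T) \<omega> * (\<rho> - rho_hat X y T \<omega>)"
      using model w unfolding pred_plus_def pred_def resid_eq[OF w] by (simp add: inner_diff_right algebra_simps)
  qed
  have mom1: "\<forall>T::nat. integral\<^sup>L M (e (int T + 1)) = 0 \<and>
             integral\<^sup>L M (\<lambda>\<omega>. (e (int T + 1) \<omega> - integral\<^sup>L M (e (int T + 1)))^2) = acov M e 0"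
    using zero_mean e2mean by simp
  have mom2: "integral\<^sup>L M (\<lambda>\<omega>. e (int T + 1) \<omega> - \<rho> * e (int T) \<omega>) = 0 \<and>
           integral\<^sup>L M (\<lambda>\<omega>. (e (int T + 1) \<omega> - \<rho> * e (int T) \<omega>
              - integral\<^sup>L M (\<lambda>\<omega>. e (int T + 1) \<omega> - \<rho> * e (int T) \<omega>))^2)
             = acov M e 0 * (1 - \<rho>^2)" for T :: nat
  proof
    show m0: "integral\<^sup>L M (\<lambda>\<omega>. e (int T + 1) \<omega> - \<rho> * e (int T) \<omega>) = 0"
      using ei zero_mean by simp
    have c1: "expectation (\<lambda>\<omega>. e (int T + 1) \<omega> * e (int T) \<omega>) = acov M e 1"
      using e1mean[of "int T + 1"] by simp
    have "(\<lambda>\<omega>. (e (int T + 1) \<omega> - \<rho> * e (int T) \<omega> - 0)^2) =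
        (\<lambda>\<omega>. (e (int T + 1) \<omega>)^2 - 2 * \<rho> * (e (int T + 1) \<omega> * e (int T) \<omega>) + \<rho>^2 * (e (int T) \<omega>)^2)"
      by (simp add: power2_eq_square algebra_simps)
    then have "integral\<^sup>L M (\<lambda>\<omega>. (e (int T + 1) \<omega> - \<rho> * e (int T) \<omega> - 0)^2)
        = acov M e 0 - 2 * \<rho> * acov M e 1 + \<rho>^2 * acov M e 0"
      using e2i eprod_i e2mean c1 by simp
    also have "\<dots> = acov M e 0 * (1 - \<rho>^2)"
      unfolding \<rho>_def using gamma0 by (simp add: field_simps power2_eq_square)
    finally show "integral\<^sup>L M (\<lambda>\<omega>. (e (int T + 1) \<omega> - \<rho> * e (int T) \<omega>
              - integral\<^sup>L M (\<lambda>\<omega>. e (int T + 1) \<omega> - \<rho> * e (int T) \<omega>))^2)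
             = acov M e 0 * (1 - \<rho>^2)" unfolding m0 .
  qed
  show ?thesis using part1 part2 mom1 part3 mom2 unfolding \<rho>_def by blast
qed


end
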